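(* Let $\Bbbk$ be an algebraically closed field, $L,G$ finite groups with $L$ acting on $G$ by automorphisms, and $H=(\Bbbk G)^*\#^\tau_\sigma L$ a (quasi-)Hopf algebra of the form described in the context. Let $g_1,\dots,g_t$ represent the $L$-orbits on $G$, $L_i=L_{g_i}$, $\sigma_i=\sigma_{g_i}$. Let $V$ be a $\Bbbk_{\sigma_i}L_i$-module and $W$ a $\Bbbk_{\sigma_j}L_j$-module (not necessarily simple), and $\widehat V,\widehat W$ the corresponding $H$-modules. Then as $H$-modules $$\widehat V\otimes\widehat W\cong\bigoplus_{x\in D}\widehat{U(x)},$$ where $D$ is a set of representatives of the double cosets $L_i\backslash L/L_j$ and $U(x)$ is the $\Bbbk_{\sigma_{g_i({}^xg_j)}}L_{g_i({}^xg_j)}$-module $$U(x)=\Big(V\!\downarrow^{L_i}_{L_i\cap{}^xL_j}\otimes{}^xW\!\downarrow^{{}^xL_j}_{L_i\cap{}^xL_j}\Big)\Big\uparrow^{L_{g_i({}^xg_j)}}_{L_i\cap{}^xL_j}.$$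
   Context: $(\Bbbk G)^*$ has basis $p_g$ with $p_g(h)=\delta_{g,h}$ and $L$-action ${}^xp_g=p_{{}^xg}$. Maps $\sigma:L\times L\to((\Bbbk G)^* )^\times$ and $\tau:L\to((\Bbbk G)^* )^\times\otimes((\Bbbk G)^* )^\times$ are written $\sigma(x,y)=\sum_g\sigma_g(x,y)p_g$, $\tau(x)=\sum_{g,h}\tau_{g,h}(x)p_g\otimes p_h$ with scalars $\sigma_g(x,y),\tau_{g,h}(x)\in\Bbbk^\times$. As an algebra $H$ has basis $p_g\overline{x}$ ($g\in G,x\in L$) with $(p_g\overline{x})(p_h\overline{y})=\delta_{g,{}^xh}\sigma_g(x,y)p_g\overline{xy}$; its coproduct is $\Delta(p_g\overline{x})=\sum_{hk=g}\tau_{h,k}(x)\,p_h\overline{x}\otimes p_k\overline{x}$, and $\sigma,\tau$ are assumed to satisfy the conditions making $H$ a (quasi-)Hopf algebra; in particular $\Delta$ is an algebra map, which gives $\sigma_g(x,y)\sigma_h(x,y)=\sigma_{gh}(x,y)\tau_{g,h}(x)^{-1}\tau_{g,h}(y)^{-1}\tau_{g,h}(xy)$ for $x,y\in L_g\cap L_h$. Tensor products of $H$-modules use $\Delta$. $L_g$ is the stabilizer of $g$; $\Bbbk_{\sigma_g}L_g$ is the twisted group algebra (basis $\overline{x}$, $x\in L_g$, $\overline{x}\,\overline{y}=\sigma_g(x,y)\overline{xy}$). For $g\in G$ and a $\Bbbk_{\sigma_g}L_g$-module $U$, $\widehat U=H\otimes_{H_g}(p_g\otimes U)$ with $H_g=(\Bbbk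 G)^*\#_\sigma L_g$ acting on $p_g\otimes U$ by $(p_h\overline{x})(p_g\otimes u)=\delta_{g,h}p_g\otimes\overline{x}u$. ${}^xW$ is the $\Bbbk_{\sigma_{{}^xg_j}}L_{{}^xg_j}$-module (note ${}^xL_j=L_{{}^xg_j}$) obtained from $W$ via the algebra isomorphism $p_{g_j}\overline{L_j}\to p_{{}^xg_j}\overline{L_{{}^xg_j}}$ given by conjugation by $\overline{x}$ in $H$. $\downarrow$ denotes restriction and $\uparrow$ induction (tensoring up) along twisted group subalgebras. For $g=g_i$, $h={}^xg_j$, the tensor product of a $\Bbbk_{\sigma_g}(L_g\cap L_h)$-module and a $\Bbbk_{\sigma_h}(L_g\cap L_h)$-module is a $\Bbbk_{\sigma_g\sigma_h}(L_g\cap L_h)$-module via $\overline{y}(v\otimes w)=\overline{y}v\otimes\overline{y}w$, and is regarded as a $\Bbbk_{\sigma_{gh}}(L_g\cap L_h)$-module via the algebra isomorphism $\psi:\Bbbk_{\sigma_{gh}}(L_g\cap L_h)\to\Bbbk_{\sigma_g\sigma_h}(L_g\cap L_h)$, $\psi(\overline{y})=\tau_{g,h}(y)\overline{y}$, before inducing to $L_{gh}$ (note $L_g\cap L_h\le L_{gh}$). *)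

theory Defs
  imports "HOL-Algebra.Coset" "HOL-Computational_Algebra.Polynomial"
begin

text \<open>A k-vector space is represented by a basis set B; its vectors are the finitely
supported functions B \<Rightarrow> k (every vector space has a basis, so this is no loss of
generality; the basis may be infinite).\<close>

definition fsp :: "'b set \<Rightarrow> ('b \<Rightarrow> 'k::field) set" where
  "fsp B = {v. finite {b. v b \<noteq> 0} \<and> (\<forall>b. v b \<noteq> 0 \<longrightarrow> b \<in> B)}"

definition smul :: "'k::field \<Rightarrow> ('b \<Rightarrow> 'k) \<Rightarrow> ('b \<Rightarrow> 'k)" where
  "smul c v = (\<lambda>b. c * v b)"

definition dl :: "'b \<Rightarrow> ('b \<Rightarrow> 'k::field)" where
  "dl b = (\<lambda>b'. if b' = b then 1 else 0)"

definition linext :: "('b \<Rightarrow> ('c \<Rightarrow> 'k::field)) \<Rightarrow> ('b \<Rightarrow> 'k) \<Rightarrow> ('c \<Rightarrow> 'k)" where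
  "linext F v = (\<lambda>y. \<Sum>b\<in>{b. v b \<noteq> 0}. v b * F b y)"

definition lin :: "'b set \<Rightarrow> 'c set \<Rightarrow> (('b \<Rightarrow> 'k::field) \<Rightarrow> ('c \<Rightarrow> 'k)) \<Rightarrow> bool" where
  "lin B C f \<longleftrightarrow> (\<forall>v\<in>fsp B. f v \<in> fsp C) \<and>
     (\<forall>u\<in>fsp B. \<forall>v\<in>fsp B. f (\<lambda>b. u b + v b) = (\<lambda>c. f u c + f v c)) \<and>
     (\<forall>a. \<forall>v\<in>fsp B. f (smul a v) = smul a (f v))"

definition vt :: "('b \<Rightarrow> 'k::field) \<Rightarrow> ('c \<Rightarrow> 'k) \<Rightarrow> ('b \<times> 'c \<Rightarrow> 'k)" where
  "vt u w = (\<lambda>(b, c). u b * w c)"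

text \<open>embedding of a vector of U as the vector r \<otimes> u in a space with basis R \<times> B\<close>
definition emb :: "'r \<Rightarrow> ('b \<Rightarrow> 'k::field) \<Rightarrow> ('r \<times> 'b \<Rightarrow> 'k)" where
  "emb r v = (\<lambda>(r', b). if r' = r then v b else 0)"

definition stab :: "'l monoid \<Rightarrow> ('l \<Rightarrow> 'g \<Rightarrow> 'g) \<Rightarrow> 'g \<Rightarrow> 'l set" where
  "stab L act g = {x \<in> carrier L. act x g = g}"

definition ltrans :: "'l monoid \<Rightarrow> 'l set \<Rightarrow> 'l set \<Rightarrow> 'l set" where
  "ltrans L T S = (SOME R. R \<subseteq> T \<and> (\<forall>t\<in>T. \<exists>!r\<in>R. t \<in> r <#\<^bsub>L\<^esub> S))"

definition lrep :: "'l monoid \<Rightarrow> 'l set \<Rightarrow> 'l set \<Rightarrow> 'l \<Rightarrow> 'l" where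
  "lrep L T S t = (THE r. r \<in> ltrans L T S \<and> t \<in> r <#\<^bsub>L\<^esub> S)"

definition dcoset :: "'l monoid \<Rightarrow> 'l set \<Rightarrow> 'l \<Rightarrow> 'l set \<Rightarrow> 'l set" where
  "dcoset L A x B = {a \<otimes>\<^bsub>L\<^esub> x \<otimes>\<^bsub>L\<^esub> b | a b. a \<in> A \<and> b \<in> B}"

definition dcoset_reps :: "'l monoid \<Rightarrow> 'l set \<Rightarrow> 'l set \<Rightarrow> 'l set \<Rightarrow> bool" where
  "dcoset_reps L A B D \<longleftrightarrow> D \<subseteq> carrier L \<and> (\<forall>y\<in>carrier L. \<exists>!x\<in>D. y \<in> dcoset L A x B)"

text \<open>Elements of H: functions on G \<times> L (coefficients w.r.t. the basis p_g xbar).\<close>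

definition pe :: "'g \<Rightarrow> 'l \<Rightarrow> ('g \<times> 'l \<Rightarrow> 'k::field)" where
  "pe g x = dl (g, x)"

definition Hmult :: "'g monoid \<Rightarrow> 'l monoid \<Rightarrow> ('l \<Rightarrow> 'g \<Rightarrow> 'g) \<Rightarrow> ('g \<Rightarrow> 'l \<Rightarrow> 'l \<Rightarrow> 'k::field)
    \<Rightarrow> ('g \<times> 'l \<Rightarrow> 'k) \<Rightarrow> ('g \<times> 'l \<Rightarrow> 'k) \<Rightarrow> ('g \<times> 'l \<Rightarrow> 'k)" where
  "Hmult G L act \<sigma> a b = (\<lambda>(g, z). \<Sum>x\<in>carrier L. \<Sum>h\<in>carrier G. \<Sum>y\<in>carrier L.
      if g \<in> carrier G \<and> g = act x h \<and> x \<otimes>\<^bsub>L\<^esub> y = z then a (g, x) * b (h, y) * \<sigma> g x y else 0)"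

definition Hone :: "'g monoid \<Rightarrow> 'l monoid \<Rightarrow> ('g \<times> 'l \<Rightarrow> 'k::field)" where
  "Hone G L = (\<lambda>(g, x). if g \<in> carrier G \<and> x = \<one>\<^bsub>L\<^esub> then 1 else 0)"

definition Helts :: "'g monoid \<Rightarrow> 'l monoid \<Rightarrow> ('g \<times> 'l \<Rightarrow> 'k::field) set" where
  "Helts G L = {a. \<forall>p. a p \<noteq> 0 \<longrightarrow> p \<in> carrier G \<times> carrier L}"

text \<open>xbar = sum_g p_g xbar\<close>
definition xbar :: "'g monoid \<Rightarrow> 'l \<Rightarrow> ('g \<times> 'l \<Rightarrow> 'k::field)" where
  "xbar G x = (\<lambda>(g, y). if g \<in> carrier G \<and> y = x then 1 else 0)"

definition Hinv :: "'g monoid \<Rightarrow> 'l monoid \<Rightarrow> ('l \<Rightarrow> 'g \<Rightarrow> 'g) \<Rightarrow> ('g \<Rightarrow> 'l \<Rightarrow> 'l \<Rightarrow> 'k::field)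
    \<Rightarrow> ('g \<times> 'l \<Rightarrow> 'k) \<Rightarrow> ('g \<times> 'l \<Rightarrow> 'k)" where
  "Hinv G L act \<sigma> a = (THE b. b \<in> Helts G L \<and> Hmult G L act \<sigma> a b = Hone G L \<and> Hmult G L act \<sigma> b a = Hone G L)"

definition Hconj :: "'g monoid \<Rightarrow> 'l monoid \<Rightarrow> ('l \<Rightarrow> 'g \<Rightarrow> 'g) \<Rightarrow> ('g \<Rightarrow> 'l \<Rightarrow> 'l \<Rightarrow> 'k::field)
    \<Rightarrow> 'l \<Rightarrow> ('g \<times> 'l \<Rightarrow> 'k) \<Rightarrow> ('g \<times> 'l \<Rightarrow> 'k)" where
  "Hconj G L act \<sigma> x a = Hmult G L act \<sigma> (Hmult G L act \<sigma> (xbar G x) a) (Hinv G L act \<sigma> (xbar G x))"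

text \<open>A module over the twisted group algebra k_c S (S \<subseteq> L), on the space with basis B.\<close>
definition tw_mod :: "'l monoid \<Rightarrow> 'l set \<Rightarrow> ('l \<Rightarrow> 'l \<Rightarrow> 'k::field) \<Rightarrow> 'b set
    \<Rightarrow> ('l \<Rightarrow> ('b \<Rightarrow> 'k) \<Rightarrow> ('b \<Rightarrow> 'k)) \<Rightarrow> bool" where
  "tw_mod L S c B \<rho> \<longleftrightarrow> (\<forall>y\<in>S. lin B B (\<rho> y)) \<and>
     (\<forall>y\<in>S. \<forall>z\<in>S. \<forall>v\<in>fsp B. \<rho> y (\<rho> z v) = smul (c y z) (\<rho> (y \<otimes>\<^bsub>L\<^esub> z) v)) \<and>
     (\<forall>v\<in>fsp B. \<rho> \<one>\<^bsub>L\<^esub> v = v)"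

text \<open>An H-module: rho g x is the action of the basis element p_g xbar.\<close>
definition H_mod :: "'g monoid \<Rightarrow> 'l monoid \<Rightarrow> ('l \<Rightarrow> 'g \<Rightarrow> 'g) \<Rightarrow> ('g \<Rightarrow> 'l \<Rightarrow> 'l \<Rightarrow> 'k::field)
    \<Rightarrow> 'b set \<Rightarrow> ('g \<Rightarrow> 'l \<Rightarrow> ('b \<Rightarrow> 'k) \<Rightarrow> ('b \<Rightarrow> 'k)) \<Rightarrow> bool" where
  "H_mod G L act \<sigma> B \<rho> \<longleftrightarrow> (\<forall>g\<in>carrier G. \<forall>x\<in>carrier L. lin B B (\<rho> g x)) \<and>
     (\<forall>g\<in>carrier G. \<forall>x\<in>carrier L. \<forall>h\<in>carrier G. \<forall>y\<in>carrier L. \<forall>v\<in>fsp B.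
        \<rho> g x (\<rho> h y v) = (if g = act x h then smul (\<sigma> g x y) (\<rho> g (x \<otimes>\<^bsub>L\<^esub> y) v) else (\<lambda>_. 0))) \<and>
     (\<forall>v\<in>fsp B. (\<lambda>b. \<Sum>g\<in>carrier G. \<rho> g \<one>\<^bsub>L\<^esub> v b) = v)"

definition H_iso :: "'g monoid \<Rightarrow> 'l monoid \<Rightarrow> 'b set \<Rightarrow> ('g \<Rightarrow> 'l \<Rightarrow> ('b \<Rightarrow> 'k::field) \<Rightarrow> ('b \<Rightarrow> 'k))
    \<Rightarrow> 'c set \<Rightarrow> ('g \<Rightarrow> 'l \<Rightarrow> ('c \<Rightarrow> 'k) \<Rightarrow> ('c \<Rightarrow> 'k)) \<Rightarrow> bool" where
  "H_iso G L B1 \<rho>1 B2 \<rho>2 \<longleftrightarrow> (\<exists>f. lin B1 B2 f \<and> bij_betw f (fsp B1) (fsp B2) \<and>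
     (\<forall>g\<in>carrier G. \<forall>x\<in>carrier L. \<forall>v\<in>fsp B1. f (\<rho>1 g x v) = \<rho>2 g x (f v)))"

definition tensH_basis :: "'b set \<Rightarrow> 'c set \<Rightarrow> ('b \<times> 'c) set" where
  "tensH_basis B C = B \<times> C"

text \<open>Delta(p_g xbar) = sum_{hk=g} tau_{h,k}(x) p_h xbar \<otimes> p_k xbar\<close>
definition tensH :: "'g monoid \<Rightarrow> ('g \<Rightarrow> 'g \<Rightarrow> 'l \<Rightarrow> 'k::field)
    \<Rightarrow> ('g \<Rightarrow> 'l \<Rightarrow> ('b \<Rightarrow> 'k) \<Rightarrow> ('b \<Rightarrow> 'k)) \<Rightarrow> ('g \<Rightarrow> 'l \<Rightarrow> ('c \<Rightarrow> 'k) \<Rightarrow> ('c \<Rightarrow> 'k))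
    \<Rightarrow> ('g \<Rightarrow> 'l \<Rightarrow> ('b \<times> 'c \<Rightarrow> 'k) \<Rightarrow> ('b \<times> 'c \<Rightarrow> 'k))" where
  "tensH G \<tau> \<rho>1 \<rho>2 g x = linext (\<lambda>(b, c). (\<lambda>p. \<Sum>h\<in>carrier G. \<Sum>k\<in>carrier G.
      if h \<otimes>\<^bsub>G\<^esub> k = g then \<tau> h k x * vt (\<rho>1 h x (dl b)) (\<rho>2 k x (dl c)) p else 0))"

subsection \<open>The induced H-module  hat U = H \<otimes>_{H_g} (p_g \<otimes> U)\<close>

text \<open>Realised on the standard basis {p_{r g} rbar \<otimes> (p_g \<otimes> u)}, r running over the chosen
  representatives R of L / L_g and u over the basis of U.  The action of p_h xbar is obtained by
  computing (p_h xbar)(p_{r g} rbar) in H and rewriting p_h (xr)bar, with x r = r' s (r' in R,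
  s in L_g), as a multiple of (p_h r'bar)(p_g sbar), using the multiplication of H.\<close>

definition indH_basis :: "'l monoid \<Rightarrow> ('l \<Rightarrow> 'g \<Rightarrow> 'g) \<Rightarrow> 'g \<Rightarrow> 'u set \<Rightarrow> ('l \<times> 'u) set" where
  "indH_basis L act g BU = ltrans L (carrier L) (stab L act g) \<times> BU"

definition indH :: "'g monoid \<Rightarrow> 'l monoid \<Rightarrow> ('l \<Rightarrow> 'g \<Rightarrow> 'g) \<Rightarrow> ('g \<Rightarrow> 'l \<Rightarrow> 'l \<Rightarrow> 'k::field)
    \<Rightarrow> 'g \<Rightarrow> ('l \<Rightarrow> ('u \<Rightarrow> 'k) \<Rightarrow> ('u \<Rightarrow> 'k))
    \<Rightarrow> ('g \<Rightarrow> 'l \<Rightarrow> ('l \<times> 'u \<Rightarrow> 'k) \<Rightarrow> ('l \<times> 'u \<Rightarrow> 'k))" where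
  "indH G L act \<sigma> g \<rho>U h x = linext (\<lambda>(r, u).
     (let Lg = stab L act g;
          r' = lrep L (carrier L) Lg (x \<otimes>\<^bsub>L\<^esub> r);
          s = inv\<^bsub>L\<^esub> r' \<otimes>\<^bsub>L\<^esub> (x \<otimes>\<^bsub>L\<^esub> r);
          a = Hmult G L act \<sigma> (pe h x) (pe (act r g) r) (h, x \<otimes>\<^bsub>L\<^esub> r);
          \<mu> = Hmult G L act \<sigma> (pe h r') (pe g s) (h, x \<otimes>\<^bsub>L\<^esub> r)
      in if h = act (x \<otimes>\<^bsub>L\<^esub> r) g then smul (a / \<mu>) (emb r' (\<rho>U s (dl u))) else (\<lambda>_. 0)))"

text \<open>Conjugate module  xW  (a k_{sigma_{x g}} L_{x g}-module) of a k_{sigma_g} L_g-module W,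
  via the isomorphism p_g L_g-bar \<rightarrow> p_{x g} L_{x g}-bar given by conjugation by xbar in H:
  z acts as Hconj^{-1}(p_{xg} zbar) = (1/lambda) p_g ybar, y = x^{-1} z x,
  where Hconj(p_g ybar) = lambda p_{xg} zbar.\<close>
definition conjmod :: "'g monoid \<Rightarrow> 'l monoid \<Rightarrow> ('l \<Rightarrow> 'g \<Rightarrow> 'g) \<Rightarrow> ('g \<Rightarrow> 'l \<Rightarrow> 'l \<Rightarrow> 'k::field)
    \<Rightarrow> 'l \<Rightarrow> 'g \<Rightarrow> ('l \<Rightarrow> ('c \<Rightarrow> 'k) \<Rightarrow> ('c \<Rightarrow> 'k)) \<Rightarrow> ('l \<Rightarrow> ('c \<Rightarrow> 'k) \<Rightarrow> ('c \<Rightarrow> 'k))" where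
  "conjmod G L act \<sigma> x g \<rho>W z w =
     (let y = inv\<^bsub>L\<^esub> x \<otimes>\<^bsub>L\<^esub> z \<otimes>\<^bsub>L\<^esub> x;
          lam = Hconj G L act \<sigma> x (pe g y) (act x g, z)
      in smul (inverse lam) (\<rho>W y w))"

text \<open>Tensor product of a k_{sigma_g}I-module and a k_{sigma_h}I-module, regarded as a
  k_{sigma_{gh}}I-module via psi(ybar) = tau_{g,h}(y) ybar.\<close>
definition tens_psi :: "('g \<Rightarrow> 'g \<Rightarrow> 'l \<Rightarrow> 'k::field) \<Rightarrow> 'g \<Rightarrow> 'g
    \<Rightarrow> ('l \<Rightarrow> ('b \<Rightarrow> 'k) \<Rightarrow> ('b \<Rightarrow> 'k)) \<Rightarrow> ('l \<Rightarrow> ('c \<Rightarrow> 'k) \<Rightarrow> ('c \<Rightarrow> 'k))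
    \<Rightarrow> ('l \<Rightarrow> ('b \<times> 'c \<Rightarrow> 'k) \<Rightarrow> ('b \<times> 'c \<Rightarrow> 'k))" where
  "tens_psi \<tau> g h \<rho>1 \<rho>2 y = linext (\<lambda>(b, c). smul (\<tau> g h y) (vt (\<rho>1 y (dl b)) (\<rho>2 y (dl c))))"

text \<open>Induction  X \<up>^T_S = k_c T \<otimes>_{k_c S} X, on the basis {rbar \<otimes> u} (r in the chosen
  representatives of T / S):  tbar (rbar \<otimes> u) = c(t,r)/c(r',s) (r'bar \<otimes> sbar u), t r = r' s.\<close>
definition indT_basis :: "'l monoid \<Rightarrow> 'l set \<Rightarrow> 'l set \<Rightarrow> 'u set \<Rightarrow> ('l \<times> 'u) set" where
  "indT_basis L T S BX = ltrans L T S \<times> BX"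

definition indT :: "'l monoid \<Rightarrow> 'l set \<Rightarrow> 'l set \<Rightarrow> ('l \<Rightarrow> 'l \<Rightarrow> 'k::field)
    \<Rightarrow> ('l \<Rightarrow> ('u \<Rightarrow> 'k) \<Rightarrow> ('u \<Rightarrow> 'k)) \<Rightarrow> ('l \<Rightarrow> ('l \<times> 'u \<Rightarrow> 'k) \<Rightarrow> ('l \<times> 'u \<Rightarrow> 'k))" where
  "indT L T S c \<rho>X t = linext (\<lambda>(r, u).
     (let r' = lrep L T S (t \<otimes>\<^bsub>L\<^esub> r);
          s = inv\<^bsub>L\<^esub> r' \<otimes>\<^bsub>L\<^esub> (t \<otimes>\<^bsub>L\<^esub> r)
      in smul (c t r / c r' s) (emb r' (\<rho>X s (dl u)))))"

definition dsum_basis :: "'i set \<Rightarrow> ('i \<Rightarrow> 'e set) \<Rightarrow> ('i \<times> 'e) set" where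
  "dsum_basis D Bs = {(i, b). i \<in> D \<and> b \<in> Bs i}"

definition dsum :: "'i set \<Rightarrow> ('i \<Rightarrow> 'g \<Rightarrow> 'l \<Rightarrow> ('e \<Rightarrow> 'k::field) \<Rightarrow> ('e \<Rightarrow> 'k))
    \<Rightarrow> ('g \<Rightarrow> 'l \<Rightarrow> ('i \<times> 'e \<Rightarrow> 'k) \<Rightarrow> ('i \<times> 'e \<Rightarrow> 'k))" where
  "dsum D \<rho>s g x v = (\<lambda>(i, b). if i \<in> D then \<rho>s i g x (\<lambda>b'. v (i, b')) b else 0)"

definition Ux_basis :: "'g monoid \<Rightarrow> 'l monoid \<Rightarrow> ('l \<Rightarrow> 'g \<Rightarrow> 'g) \<Rightarrow> 'g \<Rightarrow> 'g \<Rightarrow> 'b set \<Rightarrow> 'c set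
    \<Rightarrow> 'l \<Rightarrow> ('l \<times> ('b \<times> 'c)) set" where
  "Ux_basis G L act gi gj BV BW x =
     (let h = act x gj in
      indT_basis L (stab L act (gi \<otimes>\<^bsub>G\<^esub> h)) (stab L act gi \<inter> stab L act h) (BV \<times> BW))"

definition Ux :: "'g monoid \<Rightarrow> 'l monoid \<Rightarrow> ('l \<Rightarrow> 'g \<Rightarrow> 'g) \<Rightarrow> ('g \<Rightarrow> 'l \<Rightarrow> 'l \<Rightarrow> 'k::field)
    \<Rightarrow> ('g \<Rightarrow> 'g \<Rightarrow> 'l \<Rightarrow> 'k) \<Rightarrow> 'g \<Rightarrow> 'g
    \<Rightarrow> ('l \<Rightarrow> ('b \<Rightarrow> 'k) \<Rightarrow> ('b \<Rightarrow> 'k)) \<Rightarrow> ('l \<Rightarrow> ('c \<Rightarrow> 'k) \<Rightarrow> ('c \<Rightarrow> 'k))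
    \<Rightarrow> 'l \<Rightarrow> ('l \<Rightarrow> ('l \<times> ('b \<times> 'c) \<Rightarrow> 'k) \<Rightarrow> ('l \<times> ('b \<times> 'c) \<Rightarrow> 'k))" where
  "Ux G L act \<sigma> \<tau> gi gj \<rho>V \<rho>W x =
     (let h = act x gj in
      indT L (stab L act (gi \<otimes>\<^bsub>G\<^esub> h)) (stab L act gi \<inter> stab L act h) (\<sigma> (gi \<otimes>\<^bsub>G\<^esub> h))
        (tens_psi \<tau> gi h \<rho>V (conjmod G L act \<sigma> x gj \<rho>W)))"

definition alg_closed_field :: "'k::field itself \<Rightarrow> bool" where
  "alg_closed_field _ \<longleftrightarrow> (\<forall>p :: 'k poly. degree p > 0 \<longrightarrow> (\<exists>z. poly p z = 0))"

definition act_by_auts :: "'g monoid \<Rightarrow> 'l monoid \<Rightarrow> ('l \<Rightarrow> 'g \<Rightarrow> 'g) \<Rightarrow> bool" where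
  "act_by_auts G L act \<longleftrightarrow>
     (\<forall>x\<in>carrier L. act x \<in> hom G G \<and> bij_betw (act x) (carrier G) (carrier G)) \<and>
     (\<forall>x\<in>carrier L. \<forall>y\<in>carrier L. \<forall>g\<in>carrier G. act (x \<otimes>\<^bsub>L\<^esub> y) g = act x (act y g)) \<and>
     (\<forall>g\<in>carrier G. act \<one>\<^bsub>L\<^esub> g = g)"

text \<open>Conditions on sigma, tau: H is an associative unital algebra (normalised twisted cocycle)
  and Delta is a unital algebra map.\<close>
definition crossed_data :: "'g monoid \<Rightarrow> 'l monoid \<Rightarrow> ('l \<Rightarrow> 'g \<Rightarrow> 'g)
    \<Rightarrow> ('g \<Rightarrow> 'l \<Rightarrow> 'l \<Rightarrow> 'k::field) \<Rightarrow> ('g \<Rightarrow> 'g \<Rightarrow> 'l \<Rightarrow> 'k) \<Rightarrow> bool" where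
  "crossed_data G L act \<sigma> \<tau> \<longleftrightarrow>
     (\<forall>g\<in>carrier G. \<forall>x\<in>carrier L. \<forall>y\<in>carrier L. \<sigma> g x y \<noteq> 0) \<and>
     (\<forall>g\<in>carrier G. \<forall>h\<in>carrier G. \<forall>x\<in>carrier L. \<tau> g h x \<noteq> 0) \<and>
     (\<forall>g\<in>carrier G. \<forall>x\<in>carrier L. \<sigma> g \<one>\<^bsub>L\<^esub> x = 1 \<and> \<sigma> g x \<one>\<^bsub>L\<^esub> = 1) \<and>
     (\<forall>g\<in>carrier G. \<forall>x\<in>carrier L. \<forall>y\<in>carrier L. \<forall>z\<in>carrier L.
        \<sigma> g x y * \<sigma> g (x \<otimes>\<^bsub>L\<^esub> y) z = \<sigma> (act (inv\<^bsub>L\<^esub> x) g) y z * \<sigma> g x (y \<otimes>\<^bsub>L\<^esub> z)) \<and>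
     (\<forall>g\<in>carrier G. \<forall>h\<in>carrier G. \<tau> g h \<one>\<^bsub>L\<^esub> = 1) \<and>
     (\<forall>g\<in>carrier G. \<forall>h\<in>carrier G. \<forall>x\<in>carrier L. \<forall>y\<in>carrier L.
        \<sigma> g x y * \<sigma> h x y * \<tau> g h x * \<tau> (act (inv\<^bsub>L\<^esub> x) g) (act (inv\<^bsub>L\<^esub> x) h) y
          = \<sigma> (g \<otimes>\<^bsub>G\<^esub> h) x y * \<tau> g h (x \<otimes>\<^bsub>L\<^esub> y))"

end

theory Submission
  imports Defs
begin



section \<open>Linear algebra on finitely supported functions\<close>

definition lh :: "'b set \<Rightarrow> (('b \<Rightarrow> 'k::field) \<Rightarrow> ('c \<Rightarrow> 'k)) \<Rightarrow> bool" where
  "lh B f \<longleftrightarrow> (\<forall>u\<in>fsp B. \<forall>v\<in>fsp B. f (\<lambda>b. u b + v b) = (\<lambda>c. f u c + f v c)) \<and>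
     (\<forall>a. \<forall>v\<in>fsp B. f (smul a v) = smul a (f v))"

lemma lin_lh: "lin B C f \<Longrightarrow> lh B f"
  by (simp add: lin_def lh_def)

lemma lin_into: "lin B C f \<Longrightarrow> v \<in> fsp B \<Longrightarrow> f v \<in> fsp C"
  by (simp add: lin_def)

lemma lin_iff: "lin B C f \<longleftrightarrow> lh B f \<and> (\<forall>v\<in>fsp B. f v \<in> fsp C)"
  by (auto simp add: lin_def lh_def)

lemma fsp_iff: "v \<in> fsp B \<longleftrightarrow> finite {b. v b \<noteq> 0} \<and> {b. v b \<noteq> 0} \<subseteq> B"
  by (auto simp add: fsp_def)

lemma fsp_zero[simp]: "(\<lambda>_. 0) \<in> fsp B"
  by (simp add: fsp_def)

lemma fsp_dl[simp]: "b \<in> B \<Longrightarrow> dl b \<in> fsp B"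
  by (simp add: fsp_def dl_def)

lemma fsp_add: "u \<in> fsp B \<Longrightarrow> v \<in> fsp B \<Longrightarrow> (\<lambda>b. u b + v b) \<in> fsp B"
proof -
  assume u: "u \<in> fsp B" and v: "v \<in> fsp B"
  have "{b. u b + v b \<noteq> 0} \<subseteq> {b. u b \<noteq> 0} \<union> {b. v b \<noteq> 0}" by auto
  then show ?thesis using u v unfolding fsp_def by (auto intro: finite_subset)
qed

lemma fsp_smul: "v \<in> fsp B \<Longrightarrow> smul a v \<in> fsp B"
proof -
  assume v: "v \<in> fsp B"
  have "{b. a * v b \<noteq> 0} \<subseteq> {b. v b \<noteq> 0}" by auto
  then show ?thesis using v unfolding fsp_def smul_def by (auto intro: finite_subset)
qed

lemma fsp_sum: "finite S \<Longrightarrow> (\<And>i. i \<in> S \<Longrightarrow> u i \<in> fsp B) \<Longrightarrow> (\<lambda>b. \<Sum>i\<in>S. u i b) \<in> fsp B"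
proof (induction S rule: finite_induct)
  case empty then show ?case by simp
next
  case (insert x F)
  have "(\<lambda>b. u x b + (\<Sum>i\<in>F. u i b)) \<in> fsp B"
    using insert by (intro fsp_add) auto
  then show ?case using insert by simp
qed

lemma fsp_mono: "v \<in> fsp B \<Longrightarrow> B \<subseteq> C \<Longrightarrow> v \<in> fsp C"
  by (auto simp add: fsp_def)

lemma fsp_finite: "v \<in> fsp B \<Longrightarrow> finite {b. v b \<noteq> 0}"
  by (simp add: fsp_def)

lemma fsp_supp: "v \<in> fsp B \<Longrightarrow> v b \<noteq> 0 \<Longrightarrow> b \<in> B"
  by (simp add: fsp_def)

lemma smul_zero[simp]: "smul a (\<lambda>_. 0) = (\<lambda>_. 0)"
  by (simp add: smul_def)

lemma smul_smul: "smul a (smul b v) = smul (a * b) v"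
  by (simp add: smul_def mult.assoc)

lemma smul_one[simp]: "smul 1 v = v"
  by (simp add: smul_def)

lemma smul_0[simp]: "smul 0 v = (\<lambda>_. 0)"
  by (simp add: smul_def)

lemma lh_zero: "lh B f \<Longrightarrow> f (\<lambda>_. 0) = (\<lambda>_. 0)"
proof -
  assume "lh B f"
  then have "f (smul 0 (\<lambda>_. 0)) = smul 0 (f (\<lambda>_. 0))" unfolding lh_def using fsp_zero by blast
  then show ?thesis by simp
qed

lemma lh_add: "lh B f \<Longrightarrow> u \<in> fsp B \<Longrightarrow> v \<in> fsp B \<Longrightarrow> f (\<lambda>b. u b + v b) = (\<lambda>c. f u c + f v c)"
  by (simp add: lh_def)

lemma lh_smul: "lh B f \<Longrightarrow> v \<in> fsp B \<Longrightarrow> f (smul a v) = smul a (f v)"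
  by (simp add: lh_def)

lemma lh_sum: assumes f: "lh B f" shows "finite S \<Longrightarrow> (\<And>i. i \<in> S \<Longrightarrow> u i \<in> fsp B) \<Longrightarrow>
   f (\<lambda>b. \<Sum>i\<in>S. u i b) = (\<lambda>c. \<Sum>i\<in>S. f (u i) c)"
proof (induction S rule: finite_induct)
  case empty then show ?case by (simp add: lh_zero[OF f])
next
  case (insert x F)
  have "f (\<lambda>b. \<Sum>i\<in>insert x F. u i b) = f (\<lambda>b. u x b + (\<Sum>i\<in>F. u i b))"
    using insert by simp
  also have "\<dots> = (\<lambda>c. f (u x) c + f (\<lambda>b. \<Sum>i\<in>F. u i b) c)"
    using insert by (intro lh_add[OF f] fsp_sum) auto
  finally show ?case using insert by simp
qed

lemma expand_gen: "finite S \<Longrightarrow> {b. v b \<noteq> 0} \<subseteq> S \<Longrightarrow> v = (\<lambda>y. \<Sum>b\<in>S. v b * dl b y)"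
proof
  fix y assume S: "finite S" "{b. v b \<noteq> 0} \<subseteq> S"
  have "(\<Sum>b\<in>S. v b * dl b y) = (\<Sum>b\<in>S. if b = y then v b else 0)"
    by (rule sum.cong) (auto simp add: dl_def)
  also have "\<dots> = v y" using S by (auto simp add: sum.delta')
  finally show "v y = (\<Sum>b\<in>S. v b * dl b y)" by simp
qed

lemma linext_gen: "finite S \<Longrightarrow> {b. v b \<noteq> 0} \<subseteq> S \<Longrightarrow> linext F v = (\<lambda>y. \<Sum>b\<in>S. v b * F b y)"
proof
  fix y assume S: "finite S" "{b. v b \<noteq> 0} \<subseteq> S"
  show "linext F v y = (\<Sum>b\<in>S. v b * F b y)"
    unfolding linext_def using S by (intro sum.mono_neutral_left) auto
qed

lemma linext_dl[simp]: "linext F (dl b) = F b"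
proof -
  have "linext F (dl b) = (\<lambda>y. \<Sum>b'\<in>{b}. dl b b' * F b' y)"
    by (rule linext_gen) (auto simp add: dl_def)
  then show ?thesis by (simp add: dl_def)
qed

lemma linext_zero[simp]: "linext F (\<lambda>_. 0) = (\<lambda>_. 0)"
  by (simp add: linext_def)

lemma lh_linext: fixes F :: "'b \<Rightarrow> 'c \<Rightarrow> 'k::field" and B :: "'b set"
  shows "lh B (linext F)"
  unfolding lh_def
proof (intro conjI ballI allI)
  fix u v :: "'b \<Rightarrow> 'k" assume u: "u \<in> fsp B" and v: "v \<in> fsp B"
  let ?S = "{b. u b \<noteq> 0} \<union> {b. v b \<noteq> 0}"
  have fin: "finite ?S" using u v by (simp add: fsp_def)
  have "linext F (\<lambda>b. u b + v b) = (\<lambda>y. \<Sum>b\<in>?S. (u b + v b) * F b y)"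
    using fin by (intro linext_gen) auto
  moreover have "linext F u = (\<lambda>y. \<Sum>b\<in>?S. u b * F b y)"
    using fin by (intro linext_gen) auto
  moreover have "linext F v = (\<lambda>y. \<Sum>b\<in>?S. v b * F b y)"
    using fin by (intro linext_gen) auto
  ultimately show "linext F (\<lambda>b. u b + v b) = (\<lambda>c. linext F u c + linext F v c)"
    by (simp add: distrib_right sum.distrib)
next
  fix a and v :: "'b \<Rightarrow> 'k" assume v: "v \<in> fsp B"
  let ?S = "{b. v b \<noteq> 0}"
  have fin: "finite ?S" using v by (simp add: fsp_def)
  have "linext F (smul a v) = (\<lambda>y. \<Sum>b\<in>?S. smul a v b * F b y)"
    using fin by (intro linext_gen) (auto simp: smul_def)
  moreover have "linext F v = (\<lambda>y. \<Sum>b\<in>?S. v b * F b y)"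
    using fin by (intro linext_gen) auto
  ultimately show "linext F (smul a v) = smul a (linext F v)"
    by (simp add: smul_def sum_distrib_left mult.assoc)
qed

lemma linext_into: "(\<And>b. b \<in> B \<Longrightarrow> F b \<in> fsp C) \<Longrightarrow> v \<in> fsp B \<Longrightarrow> linext F v \<in> fsp C"
proof -
  assume F: "\<And>b. b \<in> B \<Longrightarrow> F b \<in> fsp C" and v: "v \<in> fsp B"
  have "linext F v = (\<lambda>y. \<Sum>b\<in>{b. v b \<noteq> 0}. smul (v b) (F b) y)"
    by (simp add: linext_def smul_def)
  also have "\<dots> \<in> fsp C"
    using v F by (intro fsp_sum fsp_smul) (auto simp: fsp_def)
  finally show ?thesis .
qed

lemma lin_linext: "(\<And>b. b \<in> B \<Longrightarrow> F b \<in> fsp C) \<Longrightarrow> lin B C (linext F)"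
  unfolding lin_iff using lh_linext linext_into by blast

lemma lh_expand: "lh B f \<Longrightarrow> v \<in> fsp B \<Longrightarrow> f v = linext (\<lambda>b. f (dl b)) v"
proof -
  assume f: "lh B f" and v: "v \<in> fsp B"
  let ?S = "{b. v b \<noteq> 0}"
  have fin: "finite ?S" using v by (simp add: fsp_def)
  have "v = (\<lambda>y. \<Sum>b\<in>?S. v b * dl b y)" using fin by (rule expand_gen) simp
  also have "\<dots> = (\<lambda>y. \<Sum>b\<in>?S. smul (v b) (dl b) y)" by (simp add: smul_def)
  finally have "f v = f (\<lambda>y. \<Sum>b\<in>?S. smul (v b) (dl b) y)" by simp
  also have "\<dots> = (\<lambda>c. \<Sum>b\<in>?S. f (smul (v b) (dl b)) c)"
    using v fin by (intro lh_sum[OF f]) (auto intro!: fsp_smul fsp_dl simp: fsp_supp)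
  also have "\<dots> = (\<lambda>c. \<Sum>b\<in>?S. v b * f (dl b) c)"
  proof -
    have "\<And>b. b \<in> ?S \<Longrightarrow> f (smul (v b) (dl b)) = smul (v b) (f (dl b))"
      using v by (intro lh_smul[OF f] fsp_dl) (simp add: fsp_supp)
    then show ?thesis by (intro ext sum.cong refl) (simp add: smul_def)
  qed
  also have "\<dots> = linext (\<lambda>b. f (dl b)) v" by (simp add: linext_def)
  finally show ?thesis .
qed

lemma lh_ext: "lh B f \<Longrightarrow> lh B g \<Longrightarrow> (\<And>b. b \<in> B \<Longrightarrow> f (dl b) = g (dl b)) \<Longrightarrow> v \<in> fsp B \<Longrightarrow> f v = g v"
proof -
  assume f: "lh B f" and g: "lh B g" and eq: "\<And>b. b \<in> B \<Longrightarrow> f (dl b) = g (dl b)" and v: "v \<in> fsp B"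
  have "f v = linext (\<lambda>b. f (dl b)) v" by (rule lh_expand[OF f v])
  also have "\<dots> = linext (\<lambda>b. g (dl b)) v"
    unfolding linext_def using v eq by (intro ext sum.cong) (auto simp: fsp_def)
  also have "\<dots> = g v" by (rule lh_expand[OF g v, symmetric])
  finally show ?thesis .
qed

lemma lh_comp: "lh B f \<Longrightarrow> (\<And>v. v \<in> fsp B \<Longrightarrow> f v \<in> fsp C) \<Longrightarrow> lh C g \<Longrightarrow> lh B (\<lambda>v. g (f v))"
  unfolding lh_def by (auto intro: fsp_add fsp_smul)

lemma linext_lh: "lh B f \<Longrightarrow> v \<in> fsp B \<Longrightarrow> linext (\<lambda>b. f (dl b)) v = f v"
  by (simp add: lh_expand)

lemma linext_cong: "v \<in> fsp B \<Longrightarrow> (\<And>b. b \<in> B \<Longrightarrow> F b = F' b) \<Longrightarrow> linext F v = linext F' v"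
  unfolding linext_def by (intro ext sum.cong) (auto simp: fsp_def)

section \<open>Tensors and embeddings\<close>

lemma fsp_vt: "a \<in> fsp B \<Longrightarrow> b \<in> fsp C \<Longrightarrow> vt a b \<in> fsp (B \<times> C)"
proof -
  assume a: "a \<in> fsp B" and b: "b \<in> fsp C"
  have "{p. vt a b p \<noteq> 0} \<subseteq> {x. a x \<noteq> 0} \<times> {y. b y \<noteq> 0}" by (auto simp: vt_def)
  then show ?thesis using a b unfolding fsp_def by (auto intro: finite_subset)
qed

lemma vt_dl: "vt (dl b) (dl c) = dl (b, c)"
  by (auto simp: vt_def dl_def)

lemma vt_zero1[simp]: "vt (\<lambda>_. 0) b = (\<lambda>_. 0)" by (auto simp: vt_def)
lemma vt_zero2[simp]: "vt a (\<lambda>_. 0) = (\<lambda>_. 0)" by (auto simp: vt_def)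
lemma vt_smul1: "vt (smul c a) b = smul c (vt a b)" by (auto simp: vt_def smul_def)
lemma vt_smul2: "vt a (smul c b) = smul c (vt a b)" by (auto simp: vt_def smul_def)

definition bilh :: "'b set \<Rightarrow> 'c set \<Rightarrow> (('b \<Rightarrow> 'k::field) \<Rightarrow> ('c \<Rightarrow> 'k) \<Rightarrow> ('d \<Rightarrow> 'k)) \<Rightarrow> bool" where
  "bilh B C \<Phi> \<longleftrightarrow> (\<forall>b\<in>fsp C. lh B (\<lambda>a. \<Phi> a b)) \<and> (\<forall>a\<in>fsp B. lh C (\<lambda>b. \<Phi> a b))"

lemma linext_bil: "bilh B C \<Phi> \<Longrightarrow> a \<in> fsp B \<Longrightarrow> b \<in> fsp C \<Longrightarrow>
  linext (\<lambda>(v, w). \<Phi> (dl v) (dl w)) (vt a b) = \<Phi> a b"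
proof -
  assume P: "bilh B C \<Phi>" and a: "a \<in> fsp B" and b: "b \<in> fsp C"
  let ?A = "{x. a x \<noteq> 0}" and ?B = "{y. b y \<noteq> 0}"
  have fa: "finite ?A" and fb: "finite ?B" using a b by (auto simp: fsp_def)
  have "linext (\<lambda>(v, w). \<Phi> (dl v) (dl w)) (vt a b) =
     (\<lambda>y. \<Sum>p\<in>?A \<times> ?B. vt a b p * (case p of (v, w) \<Rightarrow> \<Phi> (dl v) (dl w)) y)"
    using fa fb by (intro linext_gen) (auto simp: vt_def)
  also have "\<dots> = (\<lambda>y. \<Sum>v\<in>?A. \<Sum>w\<in>?B. a v * (b w * \<Phi> (dl v) (dl w) y))"
    by (simp add: sum.cartesian_product vt_def mult.assoc split_def)
  also have "\<dots> = (\<lambda>y. \<Sum>v\<in>?A. a v * linext (\<lambda>w. \<Phi> (dl v) (dl w)) b y)"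
  proof -
    have "\<And>v y. linext (\<lambda>w. \<Phi> (dl v) (dl w)) b y = (\<Sum>w\<in>?B. b w * \<Phi> (dl v) (dl w) y)"
      by (simp add: linext_def)
    then show ?thesis by (simp add: sum_distrib_left)
  qed
  also have "\<dots> = (\<lambda>y. \<Sum>v\<in>?A. a v * \<Phi> (dl v) b y)"
  proof -
    have "\<And>v. v \<in> ?A \<Longrightarrow> linext (\<lambda>w. \<Phi> (dl v) (dl w)) b = \<Phi> (dl v) b"
    proof -
      fix v assume "v \<in> ?A"
      then have "dl v \<in> fsp B" using fsp_supp[OF a] by (intro fsp_dl) auto
      then have "lh C (\<lambda>w. \<Phi> (dl v) w)" using P unfolding bilh_def by blast
      then show "linext (\<lambda>w. \<Phi> (dl v) (dl w)) b = \<Phi> (dl v) b" by (rule linext_lh[OF _ b])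
    qed
    then show ?thesis by (intro ext sum.cong) auto
  qed
  also have "\<dots> = linext (\<lambda>v. \<Phi> (dl v) b) a" by (simp add: linext_def)
  also have "\<dots> = \<Phi> a b"
    using P a b by (intro linext_lh) (auto simp: bilh_def)
  finally show ?thesis .
qed

lemma fsp_emb: "r \<in> R \<Longrightarrow> v \<in> fsp B \<Longrightarrow> emb r v \<in> fsp (R \<times> B)"
proof -
  assume r: "r \<in> R" and v: "v \<in> fsp B"
  have "{p. emb r v p \<noteq> 0} = (\<lambda>b. (r, b)) ` {b. v b \<noteq> 0}" by (auto simp: emb_def split: if_splits)
  then show ?thesis using r v unfolding fsp_def by (auto simp: emb_def split: if_splits)
qed

lemma emb_dl: "emb r (dl b) = dl (r, b)"
  by (auto simp: emb_def dl_def)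

lemma emb_zero[simp]: "emb r (\<lambda>_. 0) = (\<lambda>_. 0)" by (auto simp: emb_def)
lemma emb_smul: "emb r (smul c v) = smul c (emb r v)" by (auto simp: emb_def smul_def)
lemma emb_add: "emb r (\<lambda>b. u b + v b) = (\<lambda>p. emb r u p + emb r v p)" by (auto simp: emb_def)

lemma lh_emb: "lh B (emb r)"
  by (auto simp: lh_def emb_add emb_smul)

lemma lh_smul_emb: fixes f :: "('b \<Rightarrow> 'k::field) \<Rightarrow> ('c \<Rightarrow> 'k)" assumes f: "lh B f" shows "lh B (\<lambda>v. smul c (emb r (f v)))"
  unfolding lh_def
proof (intro conjI ballI allI)
  fix u v :: "'b \<Rightarrow> 'k" assume u: "u \<in> fsp B" and v: "v \<in> fsp B"
  show "smul c (emb r (f (\<lambda>b. u b + v b))) = (\<lambda>x. smul c (emb r (f u)) x + smul c (emb r (f v)) x)"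
    using lh_add[OF f u v] by (simp add: emb_add smul_def distrib_left)
next
  fix a and v :: "'b \<Rightarrow> 'k" assume v: "v \<in> fsp B"
  show "smul c (emb r (f (smul a v))) = smul a (smul c (emb r (f v)))"
    using lh_smul[OF f v] by (simp add: emb_smul smul_smul mult.commute)
qed

lemma linext_emb: "v \<in> fsp B \<Longrightarrow> linext F (emb r v) = linext (\<lambda>b. F (r, b)) v"
proof -
  assume v: "v \<in> fsp B"
  let ?S = "{b. v b \<noteq> 0}"
  have fin: "finite ?S" using v by (simp add: fsp_def)
  have "linext F (emb r v) = (\<lambda>y. \<Sum>p\<in>(\<lambda>b. (r, b)) ` ?S. emb r v p * F p y)"
    using fin by (intro linext_gen) (auto simp: emb_def split: if_splits)
  also have "\<dots> = (\<lambda>y. \<Sum>b\<in>?S. v b * F (r, b) y)"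
    by (subst sum.reindex) (auto simp: inj_on_def emb_def)
  finally show ?thesis by (simp add: linext_def)
qed

lemma emb_proj: fixes v :: "'r \<times> 'b \<Rightarrow> 'k::field" shows "v \<in> fsp (R \<times> B) \<Longrightarrow> finite R' \<Longrightarrow> R \<subseteq> R' \<Longrightarrow> v = (\<lambda>p. \<Sum>r\<in>R'. emb r (\<lambda>b. v (r, b)) p)"
proof
  fix p :: "'r \<times> 'b" assume v: "v \<in> fsp (R \<times> B)" and R': "finite R'" "R \<subseteq> R'"
  obtain r b where p: "p = (r, b)" by fastforce
  show "v p = (\<Sum>r\<in>R'. emb r (\<lambda>b. v (r, b)) p)"
  proof (cases "r \<in> R'")
    case True
    then show ?thesis using R' by (simp add: p emb_def sum.delta)
  next
    case False
    then have "v p = 0" using v R' p by (auto simp: fsp_def)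
    then show ?thesis using False by (auto simp add: p emb_def intro!: sum.neutral)
  qed
qed

lemma fsp_slice: "v \<in> fsp (R \<times> B) \<Longrightarrow> (\<lambda>b. v (r, b)) \<in> fsp B"
proof -
  assume v: "v \<in> fsp (R \<times> B)"
  have "{b. v (r, b) \<noteq> 0} = snd ` ({p. v p \<noteq> 0} \<inter> {p. fst p = r})" by force
  then show ?thesis using v unfolding fsp_def by auto
qed




section \<open>Transversals\<close>

lemma (in group) mem_lcos_iff:
  assumes "S \<subseteq> carrier G" "r \<in> carrier G" "t \<in> carrier G"
  shows "t \<in> r <# S \<longleftrightarrow> inv r \<otimes> t \<in> S"
proof
  assume "t \<in> r <# S"
  then obtain s where s: "s \<in> S" "t = r \<otimes> s" by (auto simp: l_coset_def)
  then have "s \<in> carrier G" using assms by auto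
  then have "inv r \<otimes> t = s" using assms s by (simp add: m_assoc[symmetric])
  then show "inv r \<otimes> t \<in> S" using s by simp
next
  assume "inv r \<otimes> t \<in> S"
  moreover have "t = r \<otimes> (inv r \<otimes> t)" using assms by (simp add: m_assoc[symmetric])
  ultimately show "t \<in> r <# S" by (auto simp: l_coset_def)
qed

locale transv = group L for L :: "'l monoid" (structure) +
  fixes T S
  assumes subT: "subgroup T L" and subS: "subgroup S L" and ST: "S \<subseteq> T"
begin

lemma S_car: "S \<subseteq> carrier L" using subS subgroup.subset by blast
lemma T_car: "T \<subseteq> carrier L" using subT subgroup.subset by blast

lemma lcos_eq:
  assumes "t \<in> carrier L" "t' \<in> carrier L" "inv t \<otimes> t' \<in> S"
  shows "t <# S = t' <# S"
proof -
  have *: "x <# S \<subseteq> y <# S" if xy: "x \<in> carrier L" "y \<in> carrier L" "inv y \<otimes> x \<in> S" for x y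
  proof
    fix z assume "z \<in> x <# S"
    then obtain s where s: "s \<in> S" "z = x \<otimes> s" by (auto simp: l_coset_def)
    have sc: "s \<in> carrier L" using s S_car by auto
    have "inv y \<otimes> z = (inv y \<otimes> x) \<otimes> s" using s xy sc by (simp add: m_assoc)
    also have "\<dots> \<in> S" using s xy subgroup.m_closed[OF subS] by blast
    finally show "z \<in> y <# S"
      using mem_lcos_iff[OF S_car] xy s sc by auto
  qed
  have "inv t' \<otimes> t = inv (inv t \<otimes> t')" using assms by (simp add: inv_mult_group)
  then have "inv t' \<otimes> t \<in> S" using assms subgroup.m_inv_closed[OF subS] by simp
  then show ?thesis using * assms by (intro equalityI) auto
qed

definition "ch t = (SOME r. r \<in> t <# S)"

lemma ch_mem: "t \<in> carrier L \<Longrightarrow> ch t \<in> t <# S"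
proof -
  assume tc: "t \<in> carrier L"
  have "t \<in> t <# S" using tc subgroup.one_closed[OF subS] by (force simp: l_coset_def)
  then show ?thesis unfolding ch_def by (rule someI)
qed

lemma ch_car: "t \<in> carrier L \<Longrightarrow> ch t \<in> carrier L"
  using ch_mem[of t] S_car by (auto simp: l_coset_def)

lemma ch_S: "t \<in> carrier L \<Longrightarrow> inv t \<otimes> ch t \<in> S"
  using ch_mem[of t] mem_lcos_iff[OF S_car _ ch_car] by blast

lemma ch_T: "t \<in> T \<Longrightarrow> ch t \<in> T"
proof -
  assume t: "t \<in> T"
  then have tc: "t \<in> carrier L" using T_car by auto
  have "ch t = t \<otimes> (inv t \<otimes> ch t)" using tc ch_car[OF tc] by (simp add: m_assoc[symmetric])
  also have "\<dots> \<in> T" using t ch_S[OF tc] ST subgroup.m_closed[OF subT] by blast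
  finally show ?thesis .
qed

lemma ch_eq: "t \<in> carrier L \<Longrightarrow> t' \<in> carrier L \<Longrightarrow> inv t \<otimes> t' \<in> S \<Longrightarrow> ch t = ch t'"
  unfolding ch_def using lcos_eq by simp

lemma inv_S_swap: "a \<in> carrier L \<Longrightarrow> b \<in> carrier L \<Longrightarrow> inv a \<otimes> b \<in> S \<Longrightarrow> inv b \<otimes> a \<in> S"
proof -
  assume ab: "a \<in> carrier L" "b \<in> carrier L" "inv a \<otimes> b \<in> S"
  have "inv b \<otimes> a = inv (inv a \<otimes> b)" using ab by (simp add: inv_mult_group)
  then show ?thesis using ab subgroup.m_inv_closed[OF subS] by simp
qed

lemma S_trans: "a \<in> carrier L \<Longrightarrow> b \<in> carrier L \<Longrightarrow> c \<in> carrier L \<Longrightarrow> inv a \<otimes> b \<in> S \<Longrightarrow> inv b \<otimes> c \<in> S \<Longrightarrow> inv a \<otimes> c \<in> S"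
proof -
  assume abc: "a \<in> carrier L" "b \<in> carrier L" "c \<in> carrier L" "inv a \<otimes> b \<in> S" "inv b \<otimes> c \<in> S"
  have "b \<otimes> (inv b \<otimes> c) = c" using abc by (simp add: m_assoc[symmetric])
  then have "inv a \<otimes> c = (inv a \<otimes> b) \<otimes> (inv b \<otimes> c)" using abc by (simp add: m_assoc)
  then show ?thesis using abc subgroup.m_closed[OF subS] by simp
qed

lemma ex_trans: "\<exists>R. R \<subseteq> T \<and> (\<forall>t\<in>T. \<exists>!r\<in>R. t \<in> r <#\<^bsub>L\<^esub> S)"
proof (intro exI[of _ "ch ` T"] conjI ballI)
  show "ch ` T \<subseteq> T" using ch_T by auto
next
  fix t assume t: "t \<in> T"
  then have tc: "t \<in> carrier L" using T_car by auto
  show "\<exists>!r\<in>ch ` T. t \<in> r <# S"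
  proof (rule ex1I[of _ "ch t"])
    show "ch t \<in> ch ` T \<and> t \<in> ch t <# S"
      using t tc ch_car[OF tc] ch_S[OF tc] inv_S_swap mem_lcos_iff[OF S_car] by auto
  next
    fix r assume r: "r \<in> ch ` T \<and> t \<in> r <# S"
    then obtain u where u: "u \<in> T" "r = ch u" by auto
    have uc: "u \<in> carrier L" using u T_car by auto
    have rc: "r \<in> carrier L" using u ch_car[OF uc] by simp
    have "inv r \<otimes> t \<in> S" using r rc tc mem_lcos_iff[OF S_car] by auto
    moreover have "inv u \<otimes> r \<in> S" using u ch_S[OF uc] by simp
    ultimately have "inv u \<otimes> t \<in> S" using S_trans uc rc tc by blast
    then show "r = ch t" using ch_eq uc tc u by simp
  qed
qed

abbreviation "RR \<equiv> ltrans L T S"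

lemma lt_props: "RR \<subseteq> T \<and> (\<forall>t\<in>T. \<exists>!r\<in>RR. t \<in> r <#\<^bsub>L\<^esub> S)"
  unfolding ltrans_def using ex_trans by (rule someI_ex)

lemma lt_sub: "RR \<subseteq> T" using lt_props by blast
lemma lt_car: "r \<in> RR \<Longrightarrow> r \<in> carrier L" using lt_sub T_car by blast

lemma lt_ex1: "t \<in> T \<Longrightarrow> \<exists>!r\<in>RR. inv r \<otimes> t \<in> S"
proof -
  assume t: "t \<in> T"
  then have tc: "t \<in> carrier L" using T_car by auto
  have "\<exists>!r\<in>RR. t \<in> r <# S" using lt_props t by blast
  moreover have "\<And>r. r \<in> RR \<Longrightarrow> t \<in> r <# S \<longleftrightarrow> inv r \<otimes> t \<in> S"
    using mem_lcos_iff[OF S_car] lt_car tc by blast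
  ultimately show ?thesis by metis
qed

lemma lrep_props: "t \<in> T \<Longrightarrow> lrep L T S t \<in> RR \<and> inv (lrep L T S t) \<otimes> t \<in> S"
proof -
  assume t: "t \<in> T"
  then have tc: "t \<in> carrier L" using T_car by auto
  have e: "\<exists>!r. r \<in> RR \<and> t \<in> r <# S" using lt_props t by blast
  have "lrep L T S t \<in> RR \<and> t \<in> lrep L T S t <# S"
    unfolding lrep_def by (rule theI'[OF e])
  then show ?thesis using mem_lcos_iff[OF S_car] lt_car tc by blast
qed

lemma lrep_in: "t \<in> T \<Longrightarrow> lrep L T S t \<in> RR" using lrep_props by blast
lemma lrep_S: "t \<in> T \<Longrightarrow> inv (lrep L T S t) \<otimes> t \<in> S" using lrep_props by blast
lemma lrep_car: "t \<in> T \<Longrightarrow> lrep L T S t \<in> carrier L" using lrep_in lt_car by blast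

lemma lrep_unique: "t \<in> T \<Longrightarrow> r \<in> RR \<Longrightarrow> inv r \<otimes> t \<in> S \<Longrightarrow> lrep L T S t = r"
  using lt_ex1 lrep_props by blast

lemma lrep_rep: "r \<in> RR \<Longrightarrow> lrep L T S r = r"
  using lrep_unique lt_sub lt_car subgroup.one_closed[OF subS] by (simp add: subset_iff)

lemma lrep_eq: "t \<in> T \<Longrightarrow> t' \<in> T \<Longrightarrow> inv t \<otimes> t' \<in> S \<Longrightarrow> lrep L T S t = lrep L T S t'"
proof -
  assume tt: "t \<in> T" "t' \<in> T" "inv t \<otimes> t' \<in> S"
  have c: "t \<in> carrier L" "t' \<in> carrier L" using tt T_car by auto
  have "inv (lrep L T S t) \<otimes> t' \<in> S"
    using S_trans[OF lrep_car[OF tt(1)] c] lrep_S[OF tt(1)] tt(3) by blast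
  then show ?thesis using lrep_unique[OF tt(2) lrep_in[OF tt(1)]] by simp
qed

lemma lrep_decomp: "t \<in> T \<Longrightarrow> lrep L T S t \<otimes> (inv (lrep L T S t) \<otimes> t) = t"
  using lrep_car T_car by (auto simp: m_assoc[symmetric])

lemma lrep_mult: "t \<in> T \<Longrightarrow> s \<in> S \<Longrightarrow> lrep L T S (t \<otimes> s) = lrep L T S t"
proof -
  assume ts: "t \<in> T" "s \<in> S"
  have c: "t \<in> carrier L" "s \<in> carrier L" using ts T_car S_car by auto
  have "t \<otimes> s \<in> T" using ts ST subgroup.m_closed[OF subT] by blast
  moreover have "inv t \<otimes> (t \<otimes> s) = s" using c by (simp add: m_assoc[symmetric])
  ultimately show ?thesis using lrep_eq[of t "t \<otimes> s"] ts by simp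
qed

lemma lt_finite: "finite (carrier L) \<Longrightarrow> finite RR"
proof -
  assume "finite (carrier L)"
  moreover have "RR \<subseteq> carrier L" using lt_sub T_car by (rule subset_trans)
  ultimately show ?thesis by (rule finite_subset[rotated])
qed

end




lemma sum_single: "finite A \<Longrightarrow> a \<in> A \<Longrightarrow> (\<And>x. x \<in> A \<Longrightarrow> x \<noteq> a \<Longrightarrow> f x = 0) \<Longrightarrow> sum f A = f a"
  by (subst sum.remove[of A a]) (auto intro!: sum.neutral)

locale Hctx = L: group L + G: group G for L :: "'l monoid" (structure) and G :: "'g monoid" +
  fixes act :: "'l \<Rightarrow> 'g \<Rightarrow> 'g" and \<sigma> :: "'g \<Rightarrow> 'l \<Rightarrow> 'l \<Rightarrow> 'k::field" and \<tau> :: "'g \<Rightarrow> 'g \<Rightarrow> 'l \<Rightarrow> 'k"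
  assumes finG: "finite (carrier G)" and finL: "finite (carrier L)"
    and auts: "act_by_auts G L act" and cd: "crossed_data G L act \<sigma> \<tau>"
begin

lemma act_closed[simp]: "x \<in> carrier L \<Longrightarrow> g \<in> carrier G \<Longrightarrow> act x g \<in> carrier G"
  using auts unfolding act_by_auts_def hom_def by auto

lemma act_mult: "x \<in> carrier L \<Longrightarrow> y \<in> carrier L \<Longrightarrow> g \<in> carrier G \<Longrightarrow> act (x \<otimes> y) g = act x (act y g)"
  using auts unfolding act_by_auts_def by auto

lemma act_one[simp]: "g \<in> carrier G \<Longrightarrow> act \<one> g = g"
  using auts unfolding act_by_auts_def by auto

lemma act_hom: "x \<in> carrier L \<Longrightarrow> g \<in> carrier G \<Longrightarrow> h \<in> carrier G \<Longrightarrow> act x (g \<otimes>\<^bsub>G\<^esub> h) = act x g \<otimes>\<^bsub>G\<^esub> act x h"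
  using auts unfolding act_by_auts_def hom_def by auto

lemma act_inv_l[simp]: "x \<in> carrier L \<Longrightarrow> g \<in> carrier G \<Longrightarrow> act (inv x) (act x g) = g"
  using act_mult[of "inv x" x g] by simp

lemma act_inv_r[simp]: "x \<in> carrier L \<Longrightarrow> g \<in> carrier G \<Longrightarrow> act x (act (inv x) g) = g"
  using act_mult[of x "inv x" g] by simp

lemma act_eq_iff: "x \<in> carrier L \<Longrightarrow> g \<in> carrier G \<Longrightarrow> h \<in> carrier G \<Longrightarrow> (g = act x h) = (h = act (inv x) g)"
  by auto

lemma stab_sub: "stab L act g \<subseteq> carrier L" by (auto simp: stab_def)

lemma stab_subgroup: "g \<in> carrier G \<Longrightarrow> subgroup (stab L act g) L"
proof (rule L.subgroupI)
  assume g: "g \<in> carrier G"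
  show "stab L act g \<subseteq> carrier L" by (rule stab_sub)
  show "stab L act g \<noteq> {}" using g by (auto simp: stab_def intro!: exI[of _ \<one>])
  fix x y assume x: "x \<in> stab L act g" and y: "y \<in> stab L act g"
  then show "inv x \<in> stab L act g" using g
    by (auto simp: stab_def) (metis act_inv_l)
  show "x \<otimes> y \<in> stab L act g" using x y g by (auto simp: stab_def act_mult)
qed

lemma stabI: "x \<in> carrier L \<Longrightarrow> act x g = g \<Longrightarrow> x \<in> stab L act g" by (simp add: stab_def)
lemma stabD: "x \<in> stab L act g \<Longrightarrow> act x g = g" by (simp add: stab_def)
lemma stab_car: "x \<in> stab L act g \<Longrightarrow> x \<in> carrier L" by (simp add: stab_def)

lemma stab_prod: "g \<in> carrier G \<Longrightarrow> h \<in> carrier G \<Longrightarrow> stab L act g \<inter> stab L act h \<subseteq> stab L act (g \<otimes>\<^bsub>G\<^esub> h)"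
  by (auto simp: stab_def act_hom)

lemma stab_conj: "x \<in> carrier L \<Longrightarrow> g \<in> carrier G \<Longrightarrow> z \<in> stab L act (act x g) \<Longrightarrow> inv x \<otimes> z \<otimes> x \<in> stab L act g"
  by (auto simp: stab_def act_mult)

lemma \<sigma>_nz: "g \<in> carrier G \<Longrightarrow> x \<in> carrier L \<Longrightarrow> y \<in> carrier L \<Longrightarrow> \<sigma> g x y \<noteq> 0"
  using cd unfolding crossed_data_def by blast
lemma \<tau>_nz: "g \<in> carrier G \<Longrightarrow> h \<in> carrier G \<Longrightarrow> x \<in> carrier L \<Longrightarrow> \<tau> g h x \<noteq> 0"
  using cd unfolding crossed_data_def by blast
lemma \<sigma>_1l[simp]: "g \<in> carrier G \<Longrightarrow> x \<in> carrier L \<Longrightarrow> \<sigma> g \<one> x = 1"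
  using cd unfolding crossed_data_def by blast
lemma \<sigma>_1r[simp]: "g \<in> carrier G \<Longrightarrow> x \<in> carrier L \<Longrightarrow> \<sigma> g x \<one> = 1"
  using cd unfolding crossed_data_def by blast
lemma \<tau>_1[simp]: "g \<in> carrier G \<Longrightarrow> h \<in> carrier G \<Longrightarrow> \<tau> g h \<one> = 1"
  using cd unfolding crossed_data_def by blast
lemma cocyc: "g \<in> carrier G \<Longrightarrow> x \<in> carrier L \<Longrightarrow> y \<in> carrier L \<Longrightarrow> z \<in> carrier L \<Longrightarrow>
  \<sigma> g x y * \<sigma> g (x \<otimes> y) z = \<sigma> (act (inv x) g) y z * \<sigma> g x (y \<otimes> z)"
  using cd unfolding crossed_data_def by blast
lemma tcond: "g \<in> carrier G \<Longrightarrow> h \<in> carrier G \<Longrightarrow> x \<in> carrier L \<Longrightarrow> y \<in> carrier L \<Longrightarrow>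
  \<sigma> g x y * \<sigma> h x y * \<tau> g h x * \<tau> (act (inv x) g) (act (inv x) h) y = \<sigma> (g \<otimes>\<^bsub>G\<^esub> h) x y * \<tau> g h (x \<otimes> y)"
  using cd unfolding crossed_data_def by blast

section \<open>Multiplication in H\<close>

abbreviation "HM \<equiv> Hmult G L act \<sigma>"

lemma Hmult_row:
  assumes g: "g \<in> carrier G" and z: "z \<in> carrier L" and x1: "x1 \<in> carrier L"
    and ha: "\<And>x'. a (g, x') = (if x' = x1 then \<alpha> else 0)"
  shows "HM a b (g, z) = \<alpha> * b (act (inv x1) g, inv x1 \<otimes> z) * \<sigma> g x1 (inv x1 \<otimes> z)"
proof -
  have "HM a b (g, z) = (\<Sum>x\<in>carrier L. \<Sum>h\<in>carrier G. \<Sum>y\<in>carrier L.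
      if g \<in> carrier G \<and> act x h = g \<and> x \<otimes> y = z then a (g, x) * b (h, y) * \<sigma> g x y else 0)"
    unfolding Hmult_def prod.case by (intro sum.cong refl) (simp add: eq_commute[of g])
  also have "\<dots> = (\<Sum>h\<in>carrier G. \<Sum>y\<in>carrier L.
      if g \<in> carrier G \<and> act x1 h = g \<and> x1 \<otimes> y = z then a (g, x1) * b (h, y) * \<sigma> g x1 y else 0)"
  proof (rule sum_single)
    show "finite (carrier L)" "x1 \<in> carrier L" using finL x1 by auto
    fix x assume "x \<in> carrier L" "x \<noteq> x1"
    then have "a (g, x) = 0" using ha by simp
    then show "(\<Sum>h\<in>carrier G. \<Sum>y\<in>carrier L.
      if g \<in> carrier G \<and> act x h = g \<and> x \<otimes> y = z then a (g, x) * b (h, y) * \<sigma> g x y else 0) = 0"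
      by (intro sum.neutral ballI) simp
  qed
  also have "\<dots> = (\<Sum>h\<in>carrier G. if act x1 h = g then \<alpha> * b (h, inv x1 \<otimes> z) * \<sigma> g x1 (inv x1 \<otimes> z) else 0)"
  proof (rule sum.cong[OF refl])
    fix h assume h: "h \<in> carrier G"
    have "(\<Sum>y\<in>carrier L. if g \<in> carrier G \<and> act x1 h = g \<and> x1 \<otimes> y = z then a (g, x1) * b (h, y) * \<sigma> g x1 y else 0)
       = (if g \<in> carrier G \<and> act x1 h = g \<and> x1 \<otimes> (inv x1 \<otimes> z) = z then a (g, x1) * b (h, inv x1 \<otimes> z) * \<sigma> g x1 (inv x1 \<otimes> z) else 0)"
    proof (rule sum_single)
      show "finite (carrier L)" by (rule finL)
      show "inv x1 \<otimes> z \<in> carrier L" using x1 z by simp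
      fix y assume y: "y \<in> carrier L" "y \<noteq> inv x1 \<otimes> z"
      have "x1 \<otimes> y \<noteq> z"
      proof
        assume "x1 \<otimes> y = z"
        then have "inv x1 \<otimes> z = y" using x1 y by (auto simp: L.m_assoc[symmetric])
        then show False using y by simp
      qed
      then show "(if g \<in> carrier G \<and> act x1 h = g \<and> x1 \<otimes> y = z then a (g, x1) * b (h, y) * \<sigma> g x1 y else 0) = 0" by simp
    qed
    also have "\<dots> = (if act x1 h = g then \<alpha> * b (h, inv x1 \<otimes> z) * \<sigma> g x1 (inv x1 \<otimes> z) else 0)"
      using g x1 z by (simp add: ha L.m_assoc[symmetric])
    finally show "(\<Sum>y\<in>carrier L. if g \<in> carrier G \<and> act x1 h = g \<and> x1 \<otimes> y = z then a (g, x1) * b (h, y) * \<sigma> g x1 y else 0)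
       = (if act x1 h = g then \<alpha> * b (h, inv x1 \<otimes> z) * \<sigma> g x1 (inv x1 \<otimes> z) else 0)" .
  qed
  also have "\<dots> = \<alpha> * b (act (inv x1) g, inv x1 \<otimes> z) * \<sigma> g x1 (inv x1 \<otimes> z)"
    using g x1 finG by (subst sum_single[of _ "act (inv x1) g"]) auto
  finally show ?thesis .
qed

lemma Hmult_out: "g \<notin> carrier G \<or> z \<notin> carrier L \<Longrightarrow> HM a b (g, z) = 0"
  by (auto simp: Hmult_def intro!: sum.neutral)

lemma pe_row: "pe g x (g, x') = (if x' = x then 1 else 0)"
  by (simp add: pe_def dl_def)

lemma xbar_row: "g \<in> carrier G \<Longrightarrow> xbar G x (g, x') = (if x' = x then 1 else 0)"
  by (simp add: xbar_def)

lemma Hmult_pe_pe: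
  assumes "h \<in> carrier G" "g \<in> carrier G" "x \<in> carrier L" "y \<in> carrier L" "h = act x g"
  shows "HM (pe h x) (pe g y) (h, x \<otimes> y) = \<sigma> h x y"
proof -
  have "HM (pe h x) (pe g y) (h, x \<otimes> y) = 1 * pe g y (act (inv x) h, inv x \<otimes> (x \<otimes> y)) * \<sigma> h x (inv x \<otimes> (x \<otimes> y))"
    using assms by (intro Hmult_row) (auto simp: pe_row)
  also have "inv x \<otimes> (x \<otimes> y) = y" using assms by (simp add: L.m_assoc[symmetric])
  finally show ?thesis using assms by (simp add: pe_def dl_def)
qed

definition "xinv x = (\<lambda>(h, y). if h \<in> carrier G \<and> y = inv x then inverse (\<sigma> (act x h) x (inv x)) else 0)"

lemma xinv_Helts: "xinv x \<in> Helts G L" if "x \<in> carrier L"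
  using that by (auto simp: Helts_def xinv_def)

lemma xbar_Helts: "x \<in> carrier L \<Longrightarrow> xbar G x \<in> Helts G L"
  by (auto simp: Helts_def xbar_def)

lemma sigma_inv_swap: "x \<in> carrier L \<Longrightarrow> g \<in> carrier G \<Longrightarrow> \<sigma> g (inv x) x = \<sigma> (act x g) x (inv x)"
proof -
  assume x: "x \<in> carrier L" and g: "g \<in> carrier G"
  have "\<sigma> (act x g) x (inv x) * \<sigma> (act x g) (x \<otimes> inv x) x = \<sigma> (act (inv x) (act x g)) (inv x) x * \<sigma> (act x g) x (inv x \<otimes> x)"
    using x g by (intro cocyc) auto
  then show ?thesis using x g by simp
qed

lemma xbar_xinv: "x \<in> carrier L \<Longrightarrow> HM (xbar G x) (xinv x) = Hone G L"
proof
  fix p :: "'g \<times> 'l" assume x: "x \<in> carrier L"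
  obtain g z where p: "p = (g, z)" by fastforce
  show "HM (xbar G x) (xinv x) p = Hone G L p"
  proof (cases "g \<in> carrier G \<and> z \<in> carrier L")
    case True
    then have "HM (xbar G x) (xinv x) (g, z) = 1 * xinv x (act (inv x) g, inv x \<otimes> z) * \<sigma> g x (inv x \<otimes> z)"
      using x by (intro Hmult_row) (auto simp: xbar_row)
    also have "\<dots> = (if z = \<one> then 1 else 0)"
    proof -
      have "inv x \<otimes> z = inv x \<longleftrightarrow> z = \<one>" using True x by simp
      then show ?thesis using True x by (auto simp: xinv_def \<sigma>_nz)
    qed
    finally show ?thesis using True by (simp add: p Hone_def)
  next
    case False
    then show ?thesis by (auto simp: p Hmult_out Hone_def)
  qed
qed

lemma xinv_xbar: "x \<in> carrier L \<Longrightarrow> HM (xinv x) (xbar G x) = Hone G L"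
proof
  fix p :: "'g \<times> 'l" assume x: "x \<in> carrier L"
  obtain g z where p: "p = (g, z)" by fastforce
  show "HM (xinv x) (xbar G x) p = Hone G L p"
  proof (cases "g \<in> carrier G \<and> z \<in> carrier L")
    case True
    then have "HM (xinv x) (xbar G x) (g, z) = inverse (\<sigma> (act x g) x (inv x)) * xbar G x (act (inv (inv x)) g, inv (inv x) \<otimes> z) * \<sigma> g (inv x) (inv (inv x) \<otimes> z)"
      using x by (intro Hmult_row) (auto simp: xinv_def)
    also have "\<dots> = (if z = \<one> then 1 else 0)"
    proof -
      have "x \<otimes> z = x \<longleftrightarrow> z = \<one>" using True x by simp
      then show ?thesis using True x by (auto simp: xbar_def \<sigma>_nz sigma_inv_swap)
    qed
    finally show ?thesis using True by (simp add: p Hone_def)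
  next
    case False
    then show ?thesis by (auto simp: p Hmult_out Hone_def)
  qed
qed

lemma Hinv_xbar: assumes x: "x \<in> carrier L" shows "Hinv G L act \<sigma> (xbar G x) = xinv x"
  unfolding Hinv_def
proof (rule the1_equality)
  show "xinv x \<in> Helts G L \<and> HM (xbar G x) (xinv x) = Hone G L \<and> HM (xinv x) (xbar G x) = Hone G L"
    using x xinv_Helts xbar_xinv xinv_xbar by blast
  show "\<exists>!b. b \<in> Helts G L \<and> HM (xbar G x) b = Hone G L \<and> HM b (xbar G x) = Hone G L"
  proof (rule ex1I)
    show "xinv x \<in> Helts G L \<and> HM (xbar G x) (xinv x) = Hone G L \<and> HM (xinv x) (xbar G x) = Hone G L"
      using x xinv_Helts xbar_xinv xinv_xbar by blast
    fix b assume b: "b \<in> Helts G L \<and> HM (xbar G x) b = Hone G L \<and> HM b (xbar G x) = Hone G L"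
    show "b = xinv x"
    proof
      fix p :: "'g \<times> 'l"
      obtain h y where p: "p = (h, y)" by fastforce
      show "b p = xinv x p"
      proof (cases "h \<in> carrier G \<and> y \<in> carrier L")
        case True
        have "HM (xbar G x) b (act x h, x \<otimes> y) = 1 * b (act (inv x) (act x h), inv x \<otimes> (x \<otimes> y)) * \<sigma> (act x h) x (inv x \<otimes> (x \<otimes> y))"
          using True x by (intro Hmult_row) (auto simp: xbar_row)
        also have "\<dots> = b (h, y) * \<sigma> (act x h) x y" using True x by (simp add: L.m_assoc[symmetric])
        finally have e: "b (h, y) * \<sigma> (act x h) x y = Hone G L (act x h, x \<otimes> y)" using b by simp
        have "x \<otimes> y = \<one> \<longleftrightarrow> y = inv x" using True x by (metis L.inv_equality L.inv_inv L.inv_closed L.r_inv)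
        then show ?thesis using e True x \<sigma>_nz[of "act x h" x y]
          by (auto simp: p xinv_def Hone_def field_simps)
      next
        case False
        then show ?thesis using b x by (auto simp: p Helts_def xinv_def)
      qed
    qed
  qed
qed

lemma Hconj_val:
  assumes x: "x \<in> carrier L" and g: "g \<in> carrier G" and z: "z \<in> stab L act (act x g)"
  shows "Hconj G L act \<sigma> x (pe g (inv x \<otimes> z \<otimes> x)) (act x g, z) = \<sigma> (act x g) x (inv x \<otimes> z \<otimes> x) / \<sigma> (act x g) z x"
proof -
  let ?h = "act x g" and ?y = "inv x \<otimes> z \<otimes> x"
  have zc: "z \<in> carrier L" using z by (simp add: stab_def)
  have yc: "?y \<in> carrier L" using x zc by simp
  have ys: "?y \<in> stab L act g" using stab_conj[OF x g] z by simp
  have h: "?h \<in> carrier G" using x g by simp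
  have xy: "x \<otimes> ?y = z \<otimes> x" using x zc by (simp add: L.m_assoc[symmetric])
  have A: "HM (xbar G x) (pe g ?y) = (\<lambda>p. if p = (?h, z \<otimes> x) then \<sigma> ?h x ?y else 0)"
  proof
    fix p :: "'g \<times> 'l"
    obtain g' z' where p: "p = (g', z')" by fastforce
    show "HM (xbar G x) (pe g ?y) p = (if p = (?h, z \<otimes> x) then \<sigma> ?h x ?y else 0)"
    proof (cases "g' \<in> carrier G \<and> z' \<in> carrier L")
      case True
      then have "HM (xbar G x) (pe g ?y) (g', z') = 1 * pe g ?y (act (inv x) g', inv x \<otimes> z') * \<sigma> g' x (inv x \<otimes> z')"
        using x by (intro Hmult_row) (auto simp: xbar_row)
      also have "\<dots> = (if p = (?h, z \<otimes> x) then \<sigma> ?h x ?y else 0)"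
      proof -
        have e1: "act (inv x) g' = g \<longleftrightarrow> g' = ?h" using True x g by auto
        have e2: "inv x \<otimes> z' = ?y \<longleftrightarrow> z' = z \<otimes> x"
        proof
          assume "inv x \<otimes> z' = ?y"
          then have "x \<otimes> (inv x \<otimes> z') = x \<otimes> ?y" by simp
          then show "z' = z \<otimes> x" using xy x True by (simp add: L.m_assoc[symmetric])
        next
          assume "z' = z \<otimes> x"
          then show "inv x \<otimes> z' = ?y" using x zc by (simp add: L.m_assoc)
        qed
        show ?thesis using e1 e2 by (auto simp: p pe_def dl_def)
      qed
      finally show ?thesis by (simp add: p)
    next
      case False
      then show ?thesis using x zc g by (auto simp: p Hmult_out)
    qed
  qed
  have "Hconj G L act \<sigma> x (pe g ?y) (?h, z) = HM (HM (xbar G x) (pe g ?y)) (xinv x) (?h, z)"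
    by (simp add: Hconj_def Hinv_xbar[OF x])
  also have "\<dots> = \<sigma> ?h x ?y * xinv x (act (inv (z \<otimes> x)) ?h, inv (z \<otimes> x) \<otimes> z) * \<sigma> ?h (z \<otimes> x) (inv (z \<otimes> x) \<otimes> z)"
    using h zc x by (intro Hmult_row) (auto simp: A)
  also have "\<dots> = \<sigma> ?h x ?y * inverse (\<sigma> ?h x (inv x)) * \<sigma> ?h (z \<otimes> x) (inv x)"
  proof -
    have e1: "inv (z \<otimes> x) \<otimes> z = inv x" using x zc by (simp add: L.inv_mult_group L.m_assoc)
    have e0: "act (inv z) ?h = ?h" using stabD[OF z] zc h by (metis act_inv_l)
    have e2: "act (inv (z \<otimes> x)) ?h = g"
      using x zc g e0 by (simp add: L.inv_mult_group act_mult)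
    show ?thesis using e1 e2 g x by (simp add: xinv_def)
  qed
  also have "\<dots> = \<sigma> ?h x ?y / \<sigma> ?h z x"
  proof -
    have "\<sigma> ?h z x * \<sigma> ?h (z \<otimes> x) (inv x) = \<sigma> (act (inv z) ?h) x (inv x) * \<sigma> ?h z (x \<otimes> inv x)"
      using h zc x by (intro cocyc) auto
    moreover have "act (inv z) ?h = ?h" using stabD[OF z] zc h by (metis act_inv_l)
    ultimately have "\<sigma> ?h z x * \<sigma> ?h (z \<otimes> x) (inv x) = \<sigma> ?h x (inv x)" using h zc x by simp
    then show ?thesis using \<sigma>_nz h zc x by (simp add: field_simps)
  qed
  finally show ?thesis .
qed

lemma conjmod_val:
  assumes x: "x \<in> carrier L" and g: "g \<in> carrier G" and z: "z \<in> stab L act (act x g)"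
  shows "conjmod G L act \<sigma> x g \<rho>W z w = smul (\<sigma> (act x g) z x / \<sigma> (act x g) x (inv x \<otimes> z \<otimes> x)) (\<rho>W (inv x \<otimes> z \<otimes> x) w)"
  using Hconj_val[OF assms] by (simp add: conjmod_def Let_def)

end




locale indctx0 = Hctx L G act \<sigma> \<tau> for L :: "'l monoid" (structure) and G :: "'g monoid" and act :: "'l \<Rightarrow> 'g \<Rightarrow> 'g"
  and \<sigma> :: "'g \<Rightarrow> 'l \<Rightarrow> 'l \<Rightarrow> 'k::field" and \<tau> +
  fixes g :: 'g and BU :: "'u set" and \<rho>U :: "'l \<Rightarrow> ('u \<Rightarrow> 'k) \<Rightarrow> ('u \<Rightarrow> 'k)"
  assumes g_in: "g \<in> carrier G" and ulin: "\<And>s. s \<in> stab L act g \<Longrightarrow> lin BU BU (\<rho>U s)"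

sublocale indctx0 \<subseteq> T: transv L "carrier L" "stab L act g"
  by (rule transv.intro[OF L.is_group], rule transv_axioms.intro) (auto simp: L.subgroup_self stab_subgroup g_in stab_sub)

locale indctx = indctx0 L G act \<sigma> \<tau> g BU \<rho>U for L :: "'l monoid" (structure) and G :: "'g monoid" and act :: "'l \<Rightarrow> 'g \<Rightarrow> 'g"
  and \<sigma> :: "'g \<Rightarrow> 'l \<Rightarrow> 'l \<Rightarrow> 'k::field" and \<tau> and g :: 'g and BU :: "'u set" and \<rho>U :: "'l \<Rightarrow> ('u \<Rightarrow> 'k) \<Rightarrow> ('u \<Rightarrow> 'k)" +
  assumes tw: "tw_mod L (stab L act g) (\<sigma> g) BU \<rho>U"

context indctx0 begin

abbreviation "Lg \<equiv> stab L act g"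
abbreviation "lr \<equiv> lrep L (carrier L) Lg"
abbreviation "RR \<equiv> ltrans L (carrier L) Lg"
abbreviation "\<rho> \<equiv> indH G L act \<sigma> g \<rho>U"
abbreviation "BI \<equiv> indH_basis L act g BU"

lemma BI_eq: "BI = RR \<times> BU" by (simp add: indH_basis_def)

lemma U_lin: "s \<in> Lg \<Longrightarrow> lin BU BU (\<rho>U s)" using ulin by simp
lemma U_lh: "s \<in> Lg \<Longrightarrow> lh BU (\<rho>U s)" using U_lin lin_lh by blast
lemma U_into: "s \<in> Lg \<Longrightarrow> a \<in> fsp BU \<Longrightarrow> \<rho>U s a \<in> fsp BU" using U_lin lin_into by blast

lemma Lg_car: "s \<in> Lg \<Longrightarrow> s \<in> carrier L" by (simp add: stab_def)
lemma Lg_act: "s \<in> Lg \<Longrightarrow> act s g = g" by (simp add: stab_def)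

lemma lr_props: "l \<in> carrier L \<Longrightarrow> lr l \<in> RR \<and> lr l \<in> carrier L \<and> inv (lr l) \<otimes> l \<in> Lg \<and> lr l \<otimes> (inv (lr l) \<otimes> l) = l"
  using T.lrep_in T.lrep_S T.lrep_car T.lrep_decomp by blast

lemma act_lr: "l \<in> carrier L \<Longrightarrow> act (lr l) g = act l g"
proof -
  assume l: "l \<in> carrier L"
  define s where "s = inv (lr l) \<otimes> l"
  have P: "lr l \<in> carrier L" "s \<in> Lg" "lr l \<otimes> s = l" using lr_props[OF l] s_def by auto
  have "act l g = act (lr l \<otimes> s) g" using P by simp
  also have "\<dots> = act (lr l) (act s g)" by (rule act_mult) (use P g_in Lg_car in auto)
  also have "\<dots> = act (lr l) g" using P Lg_act by simp
  finally show ?thesis by simp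
qed

lemma lin_smul_emb_U: "s \<in> Lg \<Longrightarrow> lh BU (\<lambda>v. smul c (emb r (\<rho>U s v)))"
  using U_lh[of s] by (rule lh_smul_emb)

lemma indH_emb:
  assumes k: "k \<in> carrier G" and y: "y \<in> carrier L" and r: "r \<in> RR" and b: "b \<in> fsp BU"
  shows "\<rho> k y (emb r b) = (if k = act (y \<otimes> r) g
     then smul (\<sigma> k y r / \<sigma> k (lr (y \<otimes> r)) (inv (lr (y \<otimes> r)) \<otimes> (y \<otimes> r)))
           (emb (lr (y \<otimes> r)) (\<rho>U (inv (lr (y \<otimes> r)) \<otimes> (y \<otimes> r)) b)) else (\<lambda>_. 0))"
proof -
  have rc: "r \<in> carrier L" using r T.lt_car by blast
  have yr: "y \<otimes> r \<in> carrier L" using y rc by simp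
  define r' where "r' = lr (y \<otimes> r)"
  define s where "s = inv r' \<otimes> (y \<otimes> r)"
  have P: "r' \<in> RR" "r' \<in> carrier L" "s \<in> Lg" "r' \<otimes> s = y \<otimes> r"
    using lr_props[OF yr] unfolding r'_def s_def by auto
  have "\<rho> k y (emb r b) = linext (\<lambda>u. if k = act (y \<otimes> r) g then smul (HM (pe k y) (pe (act r g) r) (k, y \<otimes> r) / HM (pe k r') (pe g s) (k, y \<otimes> r)) (emb r' (\<rho>U s (dl u))) else (\<lambda>_. 0)) b"
    unfolding indH_def r'_def s_def by (subst linext_emb[OF b]) (simp add: Let_def)
  also have "\<dots> = (if k = act (y \<otimes> r) g
     then smul (\<sigma> k y r / \<sigma> k r' s) (emb r' (\<rho>U s b)) else (\<lambda>_. 0))"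
  proof (cases "k = act (y \<otimes> r) g")
    case True
    have a: "Hmult G L act \<sigma> (pe k y) (pe (act r g) r) (k, y \<otimes> r) = \<sigma> k y r"
      using True k y rc g_in by (intro Hmult_pe_pe) (auto simp: act_mult)
    have kk: "k = act r' g" using True P g_in act_mult Lg_act Lg_car
      by (metis)
    have m: "Hmult G L act \<sigma> (pe k r') (pe g s) (k, y \<otimes> r) = \<sigma> k r' s"
      using Hmult_pe_pe[of k g r' s] kk P k g_in Lg_car by simp
    have "linext (\<lambda>u. smul (\<sigma> k y r / \<sigma> k r' s) (emb r' (\<rho>U s (dl u)))) b = smul (\<sigma> k y r / \<sigma> k r' s) (emb r' (\<rho>U s b))"
      by (rule linext_lh[OF lin_smul_emb_U[OF P(3)] b])
    then show ?thesis using True a m by simp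
  next
    case False
    then show ?thesis by (simp add: linext_def)
  qed
  finally show ?thesis by (simp add: r'_def s_def)
qed

lemma rho_lh: "lh BI (\<rho> k y)"
  unfolding indH_def by (rule lh_linext)

lemma rho_into: assumes y: "y \<in> carrier L" and v: "v \<in> fsp BI" shows "\<rho> k y v \<in> fsp BI"
  unfolding indH_def
proof (rule linext_into[OF _ v])
  fix p assume p: "p \<in> BI"
  obtain r u where ru: "p = (r, u)" "r \<in> RR" "u \<in> BU" using p BI_eq by auto
  have rc: "r \<in> carrier L" using ru T.lt_car by blast
  have yr: "y \<otimes> r \<in> carrier L" using y rc by simp
  have "emb (lr (y \<otimes> r)) (\<rho>U (inv (lr (y \<otimes> r)) \<otimes> (y \<otimes> r)) (dl u)) \<in> fsp BI"
    unfolding BI_eq using lr_props[OF yr] ru by (intro fsp_emb U_into fsp_dl) auto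
  then show "(case p of (r, u) \<Rightarrow> let Lg = stab L act g; r' = lrep L (carrier L) Lg (y \<otimes> r);
          s = inv\<^bsub>L\<^esub> r' \<otimes>\<^bsub>L\<^esub> (y \<otimes>\<^bsub>L\<^esub> r);
          a = Hmult G L act \<sigma> (pe k y) (pe (act r g) r) (k, y \<otimes>\<^bsub>L\<^esub> r);
          \<mu> = Hmult G L act \<sigma> (pe k r') (pe g s) (k, y \<otimes>\<^bsub>L\<^esub> r)
      in if k = act (y \<otimes>\<^bsub>L\<^esub> r) g then smul (a / \<mu>) (emb r' (\<rho>U s (dl u))) else (\<lambda>_. 0)) \<in> fsp BI"
    using ru by (auto simp: Let_def fsp_smul)
qed

end

context indctx begin

lemma U_mult: "s \<in> Lg \<Longrightarrow> t \<in> Lg \<Longrightarrow> a \<in> fsp BU \<Longrightarrow> \<rho>U s (\<rho>U t a) = smul (\<sigma> g s t) (\<rho>U (s \<otimes> t) a)"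
  using tw by (simp add: tw_mod_def)
lemma U_one: "a \<in> fsp BU \<Longrightarrow> \<rho>U \<one> a = a" using tw by (simp add: tw_mod_def)

definition E :: "'l \<Rightarrow> ('u \<Rightarrow> 'k) \<Rightarrow> ('l \<times> 'u \<Rightarrow> 'k)" where
  "E l a = smul (inverse (\<sigma> (act l g) (lr l) (inv (lr l) \<otimes> l))) (emb (lr l) (\<rho>U (inv (lr l) \<otimes> l) a))"

lemma E_fsp: "l \<in> carrier L \<Longrightarrow> a \<in> fsp BU \<Longrightarrow> E l a \<in> fsp BI"
  unfolding E_def BI_eq using lr_props by (intro fsp_smul fsp_emb U_into) auto

lemma E_lh: "l \<in> carrier L \<Longrightarrow> lh BU (E l)"
  unfolding E_def using lr_props by (intro lin_smul_emb_U) auto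

lemma E_rep: "r \<in> RR \<Longrightarrow> a \<in> fsp BU \<Longrightarrow> E r a = emb r a"
proof -
  assume r: "r \<in> RR" and a: "a \<in> fsp BU"
  have rc: "r \<in> carrier L" using r T.lt_car by blast
  have "lr r = r" using T.lrep_rep[OF r] .
  then show ?thesis using rc g_in a by (simp add: E_def U_one)
qed

lemma X1:
  assumes k: "k \<in> carrier G" and y: "y \<in> carrier L" and l: "l \<in> carrier L" and a: "a \<in> fsp BU"
  shows "\<rho> k y (E l a) = (if k = act (y \<otimes> l) g then smul (\<sigma> k y l) (E (y \<otimes> l) a) else (\<lambda>_. 0))"
proof -
  define r where "r = lr l"
  define s where "s = inv r \<otimes> l"
  have P: "r \<in> RR" "r \<in> carrier L" "s \<in> Lg" "r \<otimes> s = l"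
    using lr_props[OF l] unfolding r_def s_def by auto
  have sc: "s \<in> carrier L" using P Lg_car by blast
  have yr: "y \<otimes> r \<in> carrier L" using y P by simp
  define r' where "r' = lr (y \<otimes> r)"
  define s' where "s' = inv r' \<otimes> (y \<otimes> r)"
  have P': "r' \<in> RR" "r' \<in> carrier L" "s' \<in> Lg" "r' \<otimes> s' = y \<otimes> r"
    using lr_props[OF yr] unfolding r'_def s'_def by auto
  have s'c: "s' \<in> carrier L" using P' Lg_car by blast
  have yl: "y \<otimes> l = y \<otimes> r \<otimes> s" using P y sc by (simp add: L.m_assoc)
  have lr_yl: "lr (y \<otimes> l) = r'" unfolding r'_def yl using T.lrep_mult yr P by simp
  have s_yl: "inv r' \<otimes> (y \<otimes> l) = s' \<otimes> s"
    unfolding yl s'_def using y P P' sc by (simp add: L.m_assoc)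
  have act_l: "act l g = act r g" using act_lr[OF l] r_def by simp
  have act_yl: "act (y \<otimes> l) g = act (y \<otimes> r) g" using act_lr[of "y \<otimes> l"] lr_yl y l act_lr[OF yr] r'_def by simp
  have cond: "(k = act (y \<otimes> l) g) = (k = act (y \<otimes> r) g)" using act_yl by simp
  have "\<rho> k y (E l a) = smul (inverse (\<sigma> (act l g) r s)) (\<rho> k y (emb r (\<rho>U s a)))"
    unfolding E_def r_def[symmetric] s_def[symmetric]
    using lh_smul[OF rho_lh] fsp_emb[OF P(1) U_into[OF P(3) a]] BI_eq by simp
  also have "\<dots> = (if k = act (y \<otimes> r) g then smul (inverse (\<sigma> (act l g) r s))
      (smul (\<sigma> k y r / \<sigma> k r' s') (emb r' (\<rho>U s' (\<rho>U s a)))) else (\<lambda>_. 0))"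
    using indH_emb[OF k y P(1) U_into[OF P(3) a]] unfolding r'_def[symmetric] s'_def[symmetric] by simp
  also have "\<dots> = (if k = act (y \<otimes> l) g then smul (\<sigma> k y l) (E (y \<otimes> l) a) else (\<lambda>_. 0))"
  proof (cases "k = act (y \<otimes> r) g")
    case True
    have kr': "k = act r' g" using True act_lr[OF yr] r'_def by simp
    have k0: "act (inv y) k = act l g" using True act_l y P g_in by (simp add: act_mult)
    have k1: "act (inv r') k = g" using kr' P' g_in by simp
    have c1: "\<sigma> k y r * \<sigma> k (y \<otimes> r) s = \<sigma> (act l g) r s * \<sigma> k y l"
      using cocyc[OF k y P(2) sc] k0 P by simp
    have c2: "\<sigma> k r' s' * \<sigma> k (y \<otimes> r) s = \<sigma> g s' s * \<sigma> k r' (s' \<otimes> s)"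
      using cocyc[OF k P'(2) s'c sc] k1 P' by simp
    have nz: "\<sigma> (act l g) r s \<noteq> 0" "\<sigma> k r' s' \<noteq> 0" "\<sigma> k r' (s' \<otimes> s) \<noteq> 0" "\<sigma> k (y \<otimes> r) s \<noteq> 0"
      using \<sigma>_nz k g_in l P P' sc s'c y by auto
    have scal: "inverse (\<sigma> (act l g) r s) * (\<sigma> k y r / \<sigma> k r' s') * \<sigma> g s' s = \<sigma> k y l * inverse (\<sigma> k r' (s' \<otimes> s))"
    proof -
      have "\<sigma> k y r * \<sigma> g s' s * \<sigma> k r' (s' \<otimes> s) * \<sigma> k (y \<otimes> r) s = \<sigma> (act l g) r s * \<sigma> k r' s' * \<sigma> k y l * \<sigma> k (y \<otimes> r) s"
      proof -
        have "\<sigma> k y r * \<sigma> g s' s * \<sigma> k r' (s' \<otimes> s) * \<sigma> k (y \<otimes> r) s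
           = (\<sigma> k y r * \<sigma> k (y \<otimes> r) s) * (\<sigma> g s' s * \<sigma> k r' (s' \<otimes> s))" by (simp add: mult_ac)
        also have "\<dots> = (\<sigma> (act l g) r s * \<sigma> k y l) * (\<sigma> k r' s' * \<sigma> k (y \<otimes> r) s)"
          by (simp only: c1 c2[symmetric])
        finally show ?thesis by (simp add: mult_ac)
      qed
      then have "\<sigma> k y r * \<sigma> g s' s * \<sigma> k r' (s' \<otimes> s) = \<sigma> (act l g) r s * \<sigma> k r' s' * \<sigma> k y l"
        using nz by simp
      then show ?thesis using nz by (simp add: field_simps)
    qed
    have "smul (inverse (\<sigma> (act l g) r s)) (smul (\<sigma> k y r / \<sigma> k r' s') (emb r' (\<rho>U s' (\<rho>U s a))))
        = smul (inverse (\<sigma> (act l g) r s) * (\<sigma> k y r / \<sigma> k r' s') * \<sigma> g s' s) (emb r' (\<rho>U (s' \<otimes> s) a))"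
      using U_mult[OF P'(3) P(3) a] by (simp add: smul_smul emb_smul mult.assoc)
    also have "\<dots> = smul (\<sigma> k y l) (E (y \<otimes> l) a)"
      unfolding E_def lr_yl s_yl scal using act_yl True by (simp add: smul_smul)
    finally show ?thesis using True cond by simp
  next
    case False
    then show ?thesis using cond by simp
  qed
  finally show ?thesis .
qed

lemma X2:
  assumes l: "l \<in> carrier L" and s: "s \<in> Lg" and a: "a \<in> fsp BU"
  shows "E l (\<rho>U s a) = smul (\<sigma> (act l g) l s) (E (l \<otimes> s) a)"
proof -
  define r where "r = lr l"
  define s0 where "s0 = inv r \<otimes> l"
  have P: "r \<in> RR" "r \<in> carrier L" "s0 \<in> Lg" "r \<otimes> s0 = l"
    using lr_props[OF l] unfolding r_def s0_def by auto
  have sc: "s \<in> carrier L" "s0 \<in> carrier L" using P s Lg_car by auto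
  have lr_ls: "lr (l \<otimes> s) = r" unfolding r_def using T.lrep_mult l s by simp
  have s_ls: "inv r \<otimes> (l \<otimes> s) = s0 \<otimes> s" unfolding s0_def using P l sc by (simp add: L.m_assoc)
  have act_l: "act l g = act r g" using act_lr[OF l] r_def by simp
  have act_ls: "act (l \<otimes> s) g = act l g" using l sc g_in s by (simp add: act_mult Lg_act)
  have k0: "act l g \<in> carrier G" using l g_in by simp
  have c: "\<sigma> (act l g) r s0 * \<sigma> (act l g) (r \<otimes> s0) s = \<sigma> g s0 s * \<sigma> (act l g) r (s0 \<otimes> s)"
    using cocyc[OF k0 P(2) sc(2) sc(1)] act_l P g_in by simp
  have nz: "\<sigma> (act l g) r s0 \<noteq> 0" "\<sigma> (act l g) r (s0 \<otimes> s) \<noteq> 0"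
    using \<sigma>_nz k0 P sc by auto
  have scal: "inverse (\<sigma> (act l g) r s0) * \<sigma> g s0 s = \<sigma> (act l g) l s * inverse (\<sigma> (act l g) r (s0 \<otimes> s))"
    using c nz P by (simp add: field_simps)
  have "E l (\<rho>U s a) = smul (inverse (\<sigma> (act l g) r s0)) (emb r (\<rho>U s0 (\<rho>U s a)))"
    unfolding E_def r_def[symmetric] s0_def[symmetric] by simp
  also have "\<dots> = smul (inverse (\<sigma> (act l g) r s0) * \<sigma> g s0 s) (emb r (\<rho>U (s0 \<otimes> s) a))"
    using U_mult[OF P(3) s a] by (simp add: smul_smul emb_smul)
  also have "\<dots> = smul (\<sigma> (act l g) l s) (E (l \<otimes> s) a)"
    unfolding E_def lr_ls s_ls scal act_ls by (simp add: smul_smul)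
  finally show ?thesis .
qed

end




lemma lh_sumf: "finite I \<Longrightarrow> (\<And>i. i \<in> I \<Longrightarrow> lh B (F i)) \<Longrightarrow> lh B (\<lambda>a p. \<Sum>i\<in>I. F i a p)"
  unfolding lh_def by (auto simp: sum.distrib smul_def sum_distrib_left)

lemma lh_ifvt1: "lh B f \<Longrightarrow> lh B (\<lambda>a p. if C then c * vt (f a) Y p else 0)"
  unfolding lh_def by (auto simp: vt_def smul_def fun_eq_iff algebra_simps split: prod.split)

lemma lh_ifvt2: "lh B f \<Longrightarrow> lh B (\<lambda>a p. if C then c * vt X (f a) p else 0)"
  unfolding lh_def by (auto simp: vt_def smul_def fun_eq_iff algebra_simps split: prod.split)

lemma lh_vt1: "lh B f \<Longrightarrow> lh B (\<lambda>a. vt (f a) Y)"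
  unfolding lh_def by (auto simp: vt_def smul_def fun_eq_iff algebra_simps split: prod.split)

lemma lh_vt2: "lh B f \<Longrightarrow> lh B (\<lambda>a. vt X (f a))"
  unfolding lh_def by (auto simp: vt_def smul_def fun_eq_iff algebra_simps split: prod.split)

lemma lh_smulf: "lh B f \<Longrightarrow> lh B (\<lambda>a. smul c (f a))"
  unfolding lh_def by (auto simp: smul_def fun_eq_iff algebra_simps)

lemma fsp_if_mult: "X \<in> fsp B \<Longrightarrow> (\<lambda>p. if C then c * X p else 0) \<in> fsp B"
  by (cases C) (auto simp: fsp_smul[unfolded smul_def])

lemma vt_smul_both: "vt (smul c X) (smul d Y) p = c * d * vt X Y p"
  by (auto simp: vt_def smul_def split: prod.split)

lemma sum2_delta: assumes "finite A" "finite B" "a \<in> A" "b \<in> B"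
  shows "(\<Sum>x\<in>A. \<Sum>y\<in>B. if x = a \<and> y = b \<and> C x y then X x y else 0) = (if C a b then X a b else 0)"
proof -
  have "(\<Sum>x\<in>A. \<Sum>y\<in>B. if x = a \<and> y = b \<and> C x y then X x y else 0) = (\<Sum>y\<in>B. if a = a \<and> y = b \<and> C a y then X a y else 0)"
    using assms by (intro sum_single) (auto intro!: sum.neutral)
  also have "\<dots> = (if C a b then X a b else 0)"
    using assms by (subst sum_single[of B b]) auto
  finally show ?thesis .
qed

lemma lh_if0: "lh B f \<Longrightarrow> lh B (\<lambda>a. if C then f a else (\<lambda>_. 0))"
  unfolding lh_def by auto

locale mctx = Hctx L G act \<sigma> \<tau> for L :: "'l monoid" (structure) and G :: "'g monoid" and act :: "'l \<Rightarrow> 'g \<Rightarrow> 'g"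
  and \<sigma> :: "'g \<Rightarrow> 'l \<Rightarrow> 'l \<Rightarrow> 'k::field" and \<tau> +
  fixes gi gj :: 'g and BV :: "'b set" and \<rho>V :: "'l \<Rightarrow> ('b \<Rightarrow> 'k) \<Rightarrow> ('b \<Rightarrow> 'k)"
    and BW :: "'c set" and \<rho>W :: "'l \<Rightarrow> ('c \<Rightarrow> 'k) \<Rightarrow> ('c \<Rightarrow> 'k)" and D :: "'l set"
  assumes gi_in: "gi \<in> carrier G" and gj_in: "gj \<in> carrier G"
    and twV: "tw_mod L (stab L act gi) (\<sigma> gi) BV \<rho>V"
    and twW: "tw_mod L (stab L act gj) (\<sigma> gj) BW \<rho>W"
    and dreps: "dcoset_reps L (stab L act gi) (stab L act gj) D"

sublocale mctx \<subseteq> V: indctx L G act \<sigma> \<tau> gi BV \<rho>V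
  by (rule indctx.intro[OF indctx0.intro[OF Hctx_axioms]], rule indctx0_axioms.intro, rule gi_in)
     (use twV in \<open>auto simp: tw_mod_def intro: indctx_axioms.intro\<close>)
sublocale mctx \<subseteq> W: indctx L G act \<sigma> \<tau> gj BW \<rho>W
  by (rule indctx.intro[OF indctx0.intro[OF Hctx_axioms]], rule indctx0_axioms.intro, rule gj_in)
     (use twW in \<open>auto simp: tw_mod_def intro: indctx_axioms.intro\<close>)

context mctx begin

abbreviation "\<rho>M \<equiv> tensH G \<tau> V.\<rho> W.\<rho>"
abbreviation "BM \<equiv> tensH_basis V.BI W.BI"

definition "\<Phi>M k y a b = (\<lambda>p. \<Sum>h\<in>carrier G. \<Sum>h'\<in>carrier G.
      if h \<otimes>\<^bsub>G\<^esub> h' = k then \<tau> h h' y * vt (V.\<rho> h y a) (W.\<rho> h' y b) p else 0)"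

lemma \<rho>M_eq: "\<rho>M k y = linext (\<lambda>(v, w). \<Phi>M k y (dl v) (dl w))"
  by (simp add: tensH_def \<Phi>M_def)

lemma \<Phi>M_bil: "bilh V.BI W.BI (\<Phi>M k y)"
  unfolding bilh_def \<Phi>M_def
proof (intro conjI ballI)
  fix b :: "'l \<times> 'c \<Rightarrow> 'k" assume "b \<in> fsp W.BI"
  show "lh V.BI (\<lambda>a. \<lambda>p. \<Sum>h\<in>carrier G. \<Sum>h'\<in>carrier G.
      if h \<otimes>\<^bsub>G\<^esub> h' = k then \<tau> h h' y * vt (V.\<rho> h y a) (W.\<rho> h' y b) p else 0)"
    using finG by (intro lh_sumf lh_ifvt1 V.rho_lh) auto
next
  fix a :: "'l \<times> 'b \<Rightarrow> 'k" assume "a \<in> fsp V.BI"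
  show "lh W.BI (\<lambda>b. \<lambda>p. \<Sum>h\<in>carrier G. \<Sum>h'\<in>carrier G.
      if h \<otimes>\<^bsub>G\<^esub> h' = k then \<tau> h h' y * vt (V.\<rho> h y a) (W.\<rho> h' y b) p else 0)"
    using finG by (intro lh_sumf lh_ifvt2 W.rho_lh) auto
qed

lemma \<rho>M_vt: "a \<in> fsp V.BI \<Longrightarrow> b \<in> fsp W.BI \<Longrightarrow> \<rho>M k y (vt a b) = \<Phi>M k y a b"
  unfolding \<rho>M_eq by (rule linext_bil[OF \<Phi>M_bil])

lemma \<rho>M_lh: "lh BM (\<rho>M k y)"
  by (simp add: tensH_def lh_linext)

lemma \<rho>M_into: assumes y: "y \<in> carrier L" and v: "v \<in> fsp BM" shows "\<rho>M k y v \<in> fsp BM"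
  unfolding \<rho>M_eq
proof (rule linext_into[OF _ v])
  fix p assume p: "p \<in> BM"
  obtain v1 w1 where vw: "p = (v1, w1)" "v1 \<in> V.BI" "w1 \<in> W.BI" using p by (auto simp: tensH_basis_def)
  have "\<Phi>M k y (dl v1) (dl w1) \<in> fsp BM"
    unfolding \<Phi>M_def tensH_basis_def using finG vw y
    by (intro fsp_sum fsp_if_mult fsp_vt V.rho_into W.rho_into fsp_dl) auto
  then show "(case p of (v, w) \<Rightarrow> \<Phi>M k y (dl v) (dl w)) \<in> fsp BM" using vw by simp
qed

lemma T1:
  assumes k: "k \<in> carrier G" and y: "y \<in> carrier L" and l1: "l1 \<in> carrier L" and l2: "l2 \<in> carrier L"
    and a: "a \<in> fsp BV" and b: "b \<in> fsp BW"
  shows "\<rho>M k y (vt (V.E l1 a) (W.E l2 b)) =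
    (if k = act (y \<otimes> l1) gi \<otimes>\<^bsub>G\<^esub> act (y \<otimes> l2) gj
     then smul (\<tau> (act (y \<otimes> l1) gi) (act (y \<otimes> l2) gj) y * \<sigma> (act (y \<otimes> l1) gi) y l1 * \<sigma> (act (y \<otimes> l2) gj) y l2)
       (vt (V.E (y \<otimes> l1) a) (W.E (y \<otimes> l2) b)) else (\<lambda>_. 0))"
proof -
  let ?A = "act (y \<otimes> l1) gi" and ?B = "act (y \<otimes> l2) gj"
  have AB: "?A \<in> carrier G" "?B \<in> carrier G" using y l1 l2 gi_in gj_in by auto
  have "\<rho>M k y (vt (V.E l1 a) (W.E l2 b)) = \<Phi>M k y (V.E l1 a) (W.E l2 b)"
    using V.E_fsp[OF l1 a] W.E_fsp[OF l2 b] by (rule \<rho>M_vt)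
  also have "\<dots> = (\<lambda>p. \<Sum>h\<in>carrier G. \<Sum>h'\<in>carrier G.
      if h = ?A \<and> h' = ?B \<and> h \<otimes>\<^bsub>G\<^esub> h' = k then \<tau> h h' y * (\<sigma> ?A y l1 * \<sigma> ?B y l2) * vt (V.E (y \<otimes> l1) a) (W.E (y \<otimes> l2) b) p else 0)"
    unfolding \<Phi>M_def
  proof (intro ext sum.cong refl)
    fix p h h' assume h: "h \<in> carrier G" and h': "h' \<in> carrier G"
    show "(if h \<otimes>\<^bsub>G\<^esub> h' = k then \<tau> h h' y * vt (V.\<rho> h y (V.E l1 a)) (W.\<rho> h' y (W.E l2 b)) p else 0) =
      (if h = ?A \<and> h' = ?B \<and> h \<otimes>\<^bsub>G\<^esub> h' = k then \<tau> h h' y * (\<sigma> ?A y l1 * \<sigma> ?B y l2) * vt (V.E (y \<otimes> l1) a) (W.E (y \<otimes> l2) b) p else 0)"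
      unfolding V.X1[OF h y l1 a] W.X1[OF h' y l2 b] by (auto simp: vt_smul_both)
  qed
  also have "\<dots> = (\<lambda>p. if ?A \<otimes>\<^bsub>G\<^esub> ?B = k then \<tau> ?A ?B y * (\<sigma> ?A y l1 * \<sigma> ?B y l2) * vt (V.E (y \<otimes> l1) a) (W.E (y \<otimes> l2) b) p else 0)"
  proof
    fix p
    show "(\<Sum>h\<in>carrier G. \<Sum>h'\<in>carrier G.
      if h = ?A \<and> h' = ?B \<and> h \<otimes>\<^bsub>G\<^esub> h' = k then \<tau> h h' y * (\<sigma> ?A y l1 * \<sigma> ?B y l2) * vt (V.E (y \<otimes> l1) a) (W.E (y \<otimes> l2) b) p else 0)
      = (if ?A \<otimes>\<^bsub>G\<^esub> ?B = k then \<tau> ?A ?B y * (\<sigma> ?A y l1 * \<sigma> ?B y l2) * vt (V.E (y \<otimes> l1) a) (W.E (y \<otimes> l2) b) p else 0)"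
      by (rule sum2_delta[OF finG finG AB])
  qed
  finally show ?thesis using AB by (auto simp: smul_def fun_eq_iff mult.assoc)
qed

end




context mctx begin

lemma Lc1[simp]: "x \<in> carrier L \<Longrightarrow> z \<in> carrier L \<Longrightarrow> x \<otimes> (inv x \<otimes> z) = z"
  by (simp add: L.m_assoc[symmetric])
lemma Lc2[simp]: "x \<in> carrier L \<Longrightarrow> z \<in> carrier L \<Longrightarrow> inv x \<otimes> (x \<otimes> z) = z"
  by (simp add: L.m_assoc[symmetric])

abbreviation "BX \<equiv> BV \<times> BW"

definition "Q x l = linext (\<lambda>(v, w). vt (V.E l (dl v)) (W.E (l \<otimes> x) (dl w)))"
definition "cQ x l = \<tau> (act l gi) (act (l \<otimes> x) gj) l * \<sigma> (act (l \<otimes> x) gj) l x"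
definition "Q' x l u = smul (cQ x l) (Q x l u)"

lemma Q_lh: "lh BX (Q x l)" unfolding Q_def by (rule lh_linext)
lemma Q'_lh: "lh BX (Q' x l)" unfolding Q'_def by (rule lh_smulf[OF Q_lh])

lemma Q_vt: assumes x: "x \<in> carrier L" and l: "l \<in> carrier L" and a: "a \<in> fsp BV" and b: "b \<in> fsp BW"
  shows "Q x l (vt a b) = vt (V.E l a) (W.E (l \<otimes> x) b)"
proof -
  have lx: "l \<otimes> x \<in> carrier L" using x l by simp
  have "bilh BV BW (\<lambda>a b. vt (V.E l a) (W.E (l \<otimes> x) b))"
    unfolding bilh_def using V.E_lh[OF l] W.E_lh[OF lx] by (auto intro: lh_vt1 lh_vt2)
  then show ?thesis unfolding Q_def by (rule linext_bil[OF _ a b])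
qed

lemma Q_into: assumes x: "x \<in> carrier L" and l: "l \<in> carrier L" and u: "u \<in> fsp BX" shows "Q x l u \<in> fsp BM"
  unfolding Q_def
proof (rule linext_into[OF _ u])
  fix p assume "p \<in> BX"
  then obtain v w where p: "p = (v, w)" "v \<in> BV" "w \<in> BW" by auto
  have lx: "l \<otimes> x \<in> carrier L" using x l by simp
  show "(case p of (v, w) \<Rightarrow> vt (V.E l (dl v)) (W.E (l \<otimes> x) (dl w))) \<in> fsp BM"
    using p V.E_fsp[OF l] W.E_fsp[OF lx] by (auto simp: tensH_basis_def intro!: fsp_vt)
qed

lemma Q'_into: "x \<in> carrier L \<Longrightarrow> l \<in> carrier L \<Longrightarrow> u \<in> fsp BX \<Longrightarrow> Q' x l u \<in> fsp BM"
  unfolding Q'_def by (intro fsp_smul Q_into)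

lemma cQ_nz: "x \<in> carrier L \<Longrightarrow> l \<in> carrier L \<Longrightarrow> cQ x l \<noteq> 0"
  unfolding cQ_def using \<tau>_nz \<sigma>_nz gi_in gj_in by auto

lemma QA:
  assumes x: "x \<in> carrier L" and l: "l \<in> carrier L" and y: "y \<in> carrier L" and k: "k \<in> carrier G" and u: "u \<in> fsp BX"
  shows "\<rho>M k y (Q' x l u) = (if k = act (y \<otimes> l) (gi \<otimes>\<^bsub>G\<^esub> act x gj) then smul (\<sigma> k y l) (Q' x (y \<otimes> l) u) else (\<lambda>_. 0))"
proof (rule lh_ext[OF _ _ _ u])
  show "lh BX (\<lambda>u. \<rho>M k y (Q' x l u))" using Q'_lh Q'_into[OF x l] \<rho>M_lh by (rule lh_comp)
  show "lh BX (\<lambda>u. if k = act (y \<otimes> l) (gi \<otimes>\<^bsub>G\<^esub> act x gj) then smul (\<sigma> k y l) (Q' x (y \<otimes> l) u) else (\<lambda>_. 0))"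
    by (intro lh_if0 lh_smulf Q'_lh)
  fix p assume "p \<in> BX"
  then obtain v w where p: "p = (v, w)" "v \<in> BV" "w \<in> BW" by auto
  have yl: "y \<otimes> l \<in> carrier L" and lx: "l \<otimes> x \<in> carrier L" using x y l by auto
  have ylx: "y \<otimes> (l \<otimes> x) = y \<otimes> l \<otimes> x" using x y l by (simp add: L.m_assoc)
  let ?A = "act (y \<otimes> l) gi" and ?B = "act (y \<otimes> l \<otimes> x) gj"
  let ?A' = "act l gi" and ?B' = "act (l \<otimes> x) gj"
  have AB: "?A \<in> carrier G" "?B \<in> carrier G" "?A' \<in> carrier G" "?B' \<in> carrier G" using x y l gi_in gj_in by auto
  have AA: "act (inv y) ?A = ?A'" using y l gi_in by (simp add: act_mult)
  have BB: "act (inv y) ?B = ?B'" using y l x gi_in gj_in by (simp add: act_mult)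
  have cond: "?A \<otimes>\<^bsub>G\<^esub> ?B = act (y \<otimes> l) (gi \<otimes>\<^bsub>G\<^esub> act x gj)"
    using x y l gi_in gj_in by (simp add: act_hom act_mult)
  have "\<rho>M k y (Q' x l (dl p)) = smul (cQ x l) (\<rho>M k y (vt (V.E l (dl v)) (W.E (l \<otimes> x) (dl w))))"
    unfolding Q'_def Q_def p linext_dl using lh_smul[OF \<rho>M_lh] fsp_vt[OF V.E_fsp[OF l] W.E_fsp[OF lx]] p
    by (simp add: tensH_basis_def)
  also have "\<dots> = (if k = ?A \<otimes>\<^bsub>G\<^esub> ?B then smul (cQ x l * (\<tau> ?A ?B y * \<sigma> ?A y l * \<sigma> ?B y (l \<otimes> x)))
       (vt (V.E (y \<otimes> l) (dl v)) (W.E (y \<otimes> l \<otimes> x) (dl w))) else (\<lambda>_. 0))"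
    using T1[OF k y l lx fsp_dl[OF p(2)] fsp_dl[OF p(3)]] ylx by (simp add: smul_smul)
  also have "\<dots> = (if k = act (y \<otimes> l) (gi \<otimes>\<^bsub>G\<^esub> act x gj) then smul (\<sigma> k y l) (Q' x (y \<otimes> l) (dl p)) else (\<lambda>_. 0))"
  proof (cases "k = ?A \<otimes>\<^bsub>G\<^esub> ?B")
    case True
    have c1: "\<sigma> ?B y l * \<sigma> ?B (y \<otimes> l) x = \<sigma> ?B' l x * \<sigma> ?B y (l \<otimes> x)"
      using cocyc[OF AB(2) y l x] BB by simp
    have c2: "\<sigma> ?A y l * \<sigma> ?B y l * \<tau> ?A ?B y * \<tau> ?A' ?B' l = \<sigma> (?A \<otimes>\<^bsub>G\<^esub> ?B) y l * \<tau> ?A ?B (y \<otimes> l)"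
      using tcond[OF AB(1,2) y l] AA BB by simp
    have nz: "\<sigma> ?B y l \<noteq> 0" using \<sigma>_nz AB y l by auto
    have scal: "cQ x l * (\<tau> ?A ?B y * \<sigma> ?A y l * \<sigma> ?B y (l \<otimes> x)) = \<sigma> k y l * cQ x (y \<otimes> l)"
    proof -
      have "cQ x l * (\<tau> ?A ?B y * \<sigma> ?A y l * \<sigma> ?B y (l \<otimes> x)) * \<sigma> ?B y l
          = (\<sigma> ?A y l * \<sigma> ?B y l * \<tau> ?A ?B y * \<tau> ?A' ?B' l) * \<sigma> ?B y l * \<sigma> ?B (y \<otimes> l) x"
        unfolding cQ_def using c1 by (simp add: mult_ac)
      also have "\<dots> = \<sigma> k y l * cQ x (y \<otimes> l) * \<sigma> ?B y l"
        unfolding c2 cQ_def using True by (simp add: mult_ac)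
      finally show ?thesis using nz by simp
    qed
    show ?thesis
      unfolding Q'_def Q_def p linext_dl using True cond scal by (simp add: smul_smul)
  next
    case False
    then show ?thesis using cond by simp
  qed
  finally show "\<rho>M k y (Q' x l (dl p)) = (if k = act (y \<otimes> l) (gi \<otimes>\<^bsub>G\<^esub> act x gj) then smul (\<sigma> k y l) (Q' x (y \<otimes> l) (dl p)) else (\<lambda>_. 0))" .
qed

abbreviation "TP x \<equiv> tens_psi \<tau> gi (act x gj) \<rho>V (conjmod G L act \<sigma> x gj \<rho>W)"

lemma TP_dl:
  assumes x: "x \<in> carrier L" and s: "s \<in> stab L act gi \<inter> stab L act (act x gj)"
  shows "TP x s (dl (v, w)) = smul (\<tau> gi (act x gj) s * (\<sigma> (act x gj) s x / \<sigma> (act x gj) x (inv x \<otimes> s \<otimes> x)))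
     (vt (\<rho>V s (dl v)) (\<rho>W (inv x \<otimes> s \<otimes> x) (dl w)))"
  using conjmod_val[OF x gj_in, of s \<rho>W "dl w"] s by (simp add: tens_psi_def vt_smul2 smul_smul)

lemma TP_lh: "lh BX (TP x s)" unfolding tens_psi_def by (rule lh_linext)

lemma TP_into:
  assumes x: "x \<in> carrier L" and s: "s \<in> stab L act gi \<inter> stab L act (act x gj)" and u: "u \<in> fsp BX"
  shows "TP x s u \<in> fsp BX"
  unfolding tens_psi_def
proof (rule linext_into[OF _ u])
  fix p assume "p \<in> BX"
  then obtain v w where p: "p = (v, w)" "v \<in> BV" "w \<in> BW" by auto
  have y': "inv x \<otimes> s \<otimes> x \<in> stab L act gj" using stab_conj[OF x gj_in] s by auto
  show "(case p of (b, c) \<Rightarrow> smul (\<tau> gi (act x gj) s) (vt (\<rho>V s (dl b)) (conjmod G L act \<sigma> x gj \<rho>W s (dl c)))) \<in> fsp BX"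
    using p s y' conjmod_val[OF x gj_in, of s \<rho>W "dl w"]
    by (auto intro!: fsp_smul fsp_vt V.U_into W.U_into fsp_dl)
qed

lemma QT:
  assumes x: "x \<in> carrier L" and l: "l \<in> carrier L" and s: "s \<in> stab L act gi \<inter> stab L act (act x gj)"
    and u: "u \<in> fsp BX"
  shows "Q' x l (TP x s u) = smul (\<sigma> (act l (gi \<otimes>\<^bsub>G\<^esub> act x gj)) l s) (Q' x (l \<otimes> s) u)"
proof (rule lh_ext[OF _ _ _ u])
  show "lh BX (\<lambda>u. Q' x l (TP x s u))" using TP_lh TP_into[OF x s] Q'_lh by (rule lh_comp)
  show "lh BX (\<lambda>u. smul (\<sigma> (act l (gi \<otimes>\<^bsub>G\<^esub> act x gj)) l s) (Q' x (l \<otimes> s) u))" by (intro lh_smulf Q'_lh)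
  fix p assume "p \<in> BX"
  then obtain v w where p: "p = (v, w)" "v \<in> BV" "w \<in> BW" by auto
  let ?h = "act x gj"
  define y' where "y' = inv x \<otimes> s \<otimes> x"
  have sc: "s \<in> carrier L" using s by (auto simp: stab_def)
  have si: "s \<in> stab L act gi" and sh: "s \<in> stab L act ?h" using s by auto
  have y's: "y' \<in> stab L act gj" unfolding y'_def using stab_conj[OF x gj_in] sh by auto
  have y'c: "y' \<in> carrier L" using y's by (simp add: stab_def)
  have hc: "?h \<in> carrier G" using x gj_in by simp
  have lx: "l \<otimes> x \<in> carrier L" and ls: "l \<otimes> s \<in> carrier L" using l x sc by auto
  have xy': "x \<otimes> y' = s \<otimes> x" unfolding y'_def using x sc by (simp add: L.m_assoc)
  have lxy': "l \<otimes> x \<otimes> y' = l \<otimes> s \<otimes> x" using xy' l x sc y'c by (simp add: L.m_assoc)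
  let ?A = "act l gi" and ?B = "act (l \<otimes> x) gj"
  have AB: "?A \<in> carrier G" "?B \<in> carrier G" using l x gi_in gj_in by auto
  have Bh: "?B = act l ?h" using l x gj_in by (simp add: act_mult)
  have AA: "act (inv l) ?A = gi" using l gi_in by simp
  have BB: "act (inv l) ?B = ?h" using Bh l hc by simp
  have Als: "act (l \<otimes> s) gi = ?A" using l sc gi_in stabD[OF si] by (simp add: act_mult)
  have Blsx: "act (l \<otimes> s \<otimes> x) gj = ?B" using l sc x gj_in stabD[OF sh] Bh by (simp add: act_mult)
  have AhB: "act l (gi \<otimes>\<^bsub>G\<^esub> ?h) = ?A \<otimes>\<^bsub>G\<^esub> ?B" using l gi_in hc Bh by (simp add: act_hom)
  have tc: "\<sigma> ?A l s * \<sigma> ?B l s * \<tau> ?A ?B l * \<tau> gi ?h s = \<sigma> (?A \<otimes>\<^bsub>G\<^esub> ?B) l s * \<tau> ?A ?B (l \<otimes> s)"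
    using tcond[OF AB l sc] AA BB by simp
  have c1: "\<sigma> ?B l x * \<sigma> ?B (l \<otimes> x) y' = \<sigma> ?h x y' * \<sigma> ?B l (s \<otimes> x)"
    using cocyc[OF AB(2) l x y'c] BB xy' by simp
  have c2: "\<sigma> ?B l s * \<sigma> ?B (l \<otimes> s) x = \<sigma> ?h s x * \<sigma> ?B l (s \<otimes> x)"
    using cocyc[OF AB(2) l sc x] BB by simp
  have nz: "\<sigma> ?h x y' \<noteq> 0" using \<sigma>_nz hc x y'c by auto
  let ?lhs = "\<tau> gi ?h s * (\<sigma> ?h s x / \<sigma> ?h x y') * cQ x l * \<sigma> ?A l s * \<sigma> ?B (l \<otimes> x) y'"
  have e1: "?lhs = \<tau> gi ?h s * \<sigma> ?h s x * \<tau> ?A ?B l * \<sigma> ?A l s * \<sigma> ?B l (s \<otimes> x)"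
  proof -
    have "?lhs = \<tau> gi ?h s * \<sigma> ?h s x * \<tau> ?A ?B l * \<sigma> ?A l s * (\<sigma> ?B l x * \<sigma> ?B (l \<otimes> x) y') / \<sigma> ?h x y'"
      unfolding cQ_def by (simp add: mult_ac)
    also have "\<dots> = \<tau> gi ?h s * \<sigma> ?h s x * \<tau> ?A ?B l * \<sigma> ?A l s * \<sigma> ?B l (s \<otimes> x)"
      unfolding c1 using nz by simp
    finally show ?thesis .
  qed
  have e2: "\<sigma> (act l (gi \<otimes>\<^bsub>G\<^esub> ?h)) l s * cQ x (l \<otimes> s) = \<tau> gi ?h s * \<sigma> ?h s x * \<tau> ?A ?B l * \<sigma> ?A l s * \<sigma> ?B l (s \<otimes> x)"
  proof -
    have "\<sigma> (act l (gi \<otimes>\<^bsub>G\<^esub> ?h)) l s * cQ x (l \<otimes> s) = \<sigma> (?A \<otimes>\<^bsub>G\<^esub> ?B) l s * \<tau> ?A ?B (l \<otimes> s) * \<sigma> ?B (l \<otimes> s) x"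
      unfolding cQ_def AhB Als Blsx by (simp add: mult_ac)
    also have "\<dots> = \<sigma> ?A l s * \<tau> ?A ?B l * \<tau> gi ?h s * (\<sigma> ?B l s * \<sigma> ?B (l \<otimes> s) x)"
      unfolding tc[symmetric] by (simp add: mult_ac)
    also have "\<dots> = \<tau> gi ?h s * \<sigma> ?h s x * \<tau> ?A ?B l * \<sigma> ?A l s * \<sigma> ?B l (s \<otimes> x)"
      unfolding c2 by (simp add: mult_ac)
    finally show ?thesis .
  qed
  have vtin: "vt (\<rho>V s (dl v)) (\<rho>W y' (dl w)) \<in> fsp BX"
    using p si y's by (intro fsp_vt V.U_into W.U_into fsp_dl) auto
  have "Q' x l (TP x s (dl p)) = smul (\<tau> gi ?h s * (\<sigma> ?h s x / \<sigma> ?h x y')) (Q' x l (vt (\<rho>V s (dl v)) (\<rho>W y' (dl w))))"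
    unfolding p TP_dl[OF x s] y'_def[symmetric] using lh_smul[OF Q'_lh vtin] by simp
  also have "\<dots> = smul (\<tau> gi ?h s * (\<sigma> ?h s x / \<sigma> ?h x y') * cQ x l) (vt (V.E l (\<rho>V s (dl v))) (W.E (l \<otimes> x) (\<rho>W y' (dl w))))"
    unfolding Q'_def using Q_vt[OF x l V.U_into[OF si fsp_dl] W.U_into[OF y's fsp_dl]] p by (simp add: smul_smul)
  also have "\<dots> = smul ?lhs (vt (V.E (l \<otimes> s) (dl v)) (W.E (l \<otimes> s \<otimes> x) (dl w)))"
    unfolding V.X2[OF l si fsp_dl[OF p(2)]] W.X2[OF lx y's fsp_dl[OF p(3)]] lxy'
    by (simp add: vt_smul1 vt_smul2 smul_smul mult_ac)
  also have "\<dots> = smul (\<sigma> (act l (gi \<otimes>\<^bsub>G\<^esub> ?h)) l s) (Q' x (l \<otimes> s) (dl p))"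
    unfolding Q'_def Q_def p linext_dl e1 e2[symmetric] using sc l x by (simp add: smul_smul L.m_assoc)
  finally show "Q' x l (TP x s (dl p)) = smul (\<sigma> (act l (gi \<otimes>\<^bsub>G\<^esub> act x gj)) l s) (Q' x (l \<otimes> s) (dl p))" .
qed

end




context mctx begin

abbreviation "gx x \<equiv> gi \<otimes>\<^bsub>G\<^esub> act x gj"
abbreviation "Tx x \<equiv> stab L act (gx x)"
abbreviation "Kx x \<equiv> stab L act gi \<inter> stab L act (act x gj)"
abbreviation "\<rho>Ux x \<equiv> Ux G L act \<sigma> \<tau> gi gj \<rho>V \<rho>W x"
abbreviation "BUx x \<equiv> Ux_basis G L act gi gj BV BW x"
abbreviation "BIx x \<equiv> indH_basis L act (gx x) (BUx x)"
abbreviation "\<rho>s x \<equiv> indH G L act \<sigma> (gx x) (\<rho>Ux x)"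
abbreviation "BR \<equiv> dsum_basis D (\<lambda>x. BIx x)"
abbreviation "\<rho>R \<equiv> dsum D (\<lambda>x. \<rho>s x)"

lemma D_car: "D \<subseteq> carrier L" using dreps by (simp add: dcoset_reps_def)
lemma D_fin: "finite D" using D_car finL finite_subset by blast

lemma gx_in: "x \<in> carrier L \<Longrightarrow> gx x \<in> carrier G" using gi_in gj_in by simp

lemma Ux_eq: "\<rho>Ux x = indT L (Tx x) (Kx x) (\<sigma> (gx x)) (TP x)"
  by (simp add: Ux_def Let_def)

lemma BUx_eq: "BUx x = ltrans L (Tx x) (Kx x) \<times> BX"
  by (simp add: Ux_basis_def Let_def indT_basis_def)

lemma TK_transv: "x \<in> carrier L \<Longrightarrow> transv L (Tx x) (Kx x)"
proof -
  assume x: "x \<in> carrier L"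
  have h: "act x gj \<in> carrier G" using x gj_in by simp
  show ?thesis
    by (rule transv.intro[OF L.is_group], rule transv_axioms.intro)
       (use stab_prod[OF gi_in h] x h in \<open>auto intro!: stab_subgroup L.subgroups_Inter_pair gi_in gx_in\<close>)
qed

lemma Kx_sub: "s \<in> Kx x \<Longrightarrow> s \<in> carrier L" by (auto simp: stab_def)

lemma indT_dl:
  assumes x: "x \<in> carrier L" and s: "s \<in> Tx x"
  shows "\<rho>Ux x s (dl (t, z)) = smul (\<sigma> (gx x) s t / \<sigma> (gx x) (lrep L (Tx x) (Kx x) (s \<otimes> t)) (inv (lrep L (Tx x) (Kx x) (s \<otimes> t)) \<otimes> (s \<otimes> t)))
     (emb (lrep L (Tx x) (Kx x) (s \<otimes> t)) (TP x (inv (lrep L (Tx x) (Kx x) (s \<otimes> t)) \<otimes> (s \<otimes> t)) (dl z)))"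
  unfolding Ux_eq indT_def by (simp add: Let_def)

lemma Ux_lin: assumes x: "x \<in> carrier L" and s: "s \<in> Tx x" shows "lin (BUx x) (BUx x) (\<rho>Ux x s)"
  unfolding Ux_eq indT_def
proof (rule lin_linext)
  interpret TK: transv L "Tx x" "Kx x" using TK_transv[OF x] .
  fix p assume p: "p \<in> BUx x"
  then obtain t z where tz: "p = (t, z)" "t \<in> ltrans L (Tx x) (Kx x)" "z \<in> BX" using BUx_eq by auto
  have st: "s \<otimes> t \<in> Tx x" using s tz TK.lt_sub subgroup.m_closed[OF TK.subT] by blast
  have K: "inv (lrep L (Tx x) (Kx x) (s \<otimes> t)) \<otimes> (s \<otimes> t) \<in> Kx x" by (rule TK.lrep_S[OF st])
  show "(case p of (r, u) \<Rightarrow> let r' = lrep L (Tx x) (Kx x) (s \<otimes> r); sa = inv r' \<otimes> (s \<otimes> r)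
       in smul (\<sigma> (gx x) s r / \<sigma> (gx x) r' sa) (emb r' (TP x sa (dl u)))) \<in> fsp (BUx x)"
    unfolding BUx_eq using tz TK.lrep_in[OF st] K x
    by (auto simp: Let_def intro!: fsp_smul fsp_emb TP_into fsp_dl)
qed

lemma U0: "x \<in> carrier L \<Longrightarrow> indctx0 L G act \<sigma> \<tau> (gx x) (BUx x) (\<rho>Ux x)"
  by (rule indctx0.intro[OF Hctx_axioms], rule indctx0_axioms.intro) (auto simp: gx_in Ux_lin)

definition "Fx x = linext (\<lambda>(r, (t, vw)). smul (\<sigma> (act r (gx x)) r t) (Q' x (r \<otimes> t) (dl vw)))"
definition "FF v = (\<lambda>p. \<Sum>x\<in>D. Fx x (\<lambda>b. v (x, b)) p)"

lemma Fx_emb2: assumes z: "z \<in> fsp BX"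
  shows "Fx x (emb r (emb t z)) = smul (\<sigma> (act r (gx x)) r t) (Q' x (r \<otimes> t) z)"
proof -
  have "Fx x (emb r (emb t z)) = linext (\<lambda>b. case (r, b) of (r, t, vw) \<Rightarrow> smul (\<sigma> (act r (gx x)) r t) (Q' x (r \<otimes> t) (dl vw))) (emb t z)"
    unfolding Fx_def by (rule linext_emb[OF fsp_emb[OF UNIV_I z]])
  also have "\<dots> = linext (\<lambda>vw. smul (\<sigma> (act r (gx x)) r t) (Q' x (r \<otimes> t) (dl vw))) z"
    by (subst linext_emb[OF z]) simp
  also have "\<dots> = smul (\<sigma> (act r (gx x)) r t) (Q' x (r \<otimes> t) z)"
    by (rule linext_lh[OF lh_smulf[OF Q'_lh] z])
  finally show ?thesis .
qed

lemma Fx_lh: "lh B (Fx x)" unfolding Fx_def by (rule lh_linext)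

lemma Fx_into: assumes x: "x \<in> carrier L" and v: "v \<in> fsp (BIx x)" shows "Fx x v \<in> fsp BM"
  unfolding Fx_def
proof (rule linext_into[OF _ v])
  interpret TK: transv L "Tx x" "Kx x" using TK_transv[OF x] .
  interpret U: indctx0 L G act \<sigma> \<tau> "gx x" "BUx x" "\<rho>Ux x" using U0[OF x] .
  fix p assume p: "p \<in> BIx x"
  then obtain r t vw where q: "p = (r, t, vw)" "r \<in> U.RR" "t \<in> ltrans L (Tx x) (Kx x)" "vw \<in> BX"
    using U.BI_eq BUx_eq by auto
  have "r \<in> carrier L" "t \<in> carrier L" using q U.T.lt_car TK.lt_car by auto
  then show "(case p of (r, t, vw) \<Rightarrow> smul (\<sigma> (act r (gx x)) r t) (Q' x (r \<otimes> t) (dl vw))) \<in> fsp BM"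
    using q x by (auto intro!: fsp_smul Q'_into fsp_dl)
qed

lemma BR_slice: "v \<in> fsp BR \<Longrightarrow> (\<lambda>b. v (x, b)) \<in> fsp (BIx x)"
proof -
  assume v: "v \<in> fsp BR"
  have "{b. v (x, b) \<noteq> 0} \<subseteq> snd ` {p. v p \<noteq> 0}" by force
  then have "finite {b. v (x, b) \<noteq> 0}" using v finite_subset by (auto simp: fsp_def)
  moreover have "{b. v (x, b) \<noteq> 0} \<subseteq> BIx x" using v by (auto simp: fsp_def dsum_basis_def)
  ultimately show ?thesis by (simp add: fsp_def subset_iff)
qed

lemma BR_slice0: assumes v: "v \<in> fsp BR" and x: "x \<notin> D" shows "(\<lambda>b. v (x, b)) = (\<lambda>_. 0)"
proof (rule ext, rule ccontr)
  fix b assume "v (x, b) \<noteq> 0"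
  then have "(x, b) \<in> BR" using fsp_supp[OF v] by blast
  then show False using x by (simp add: dsum_basis_def)
qed

lemma FF_lh: "lh BR FF"
  unfolding lh_def FF_def
proof (intro conjI ballI allI)
  fix u v :: "'l \<times> 'l \<times> 'l \<times> 'b \<times> 'c \<Rightarrow> 'k" assume u: "u \<in> fsp BR" and v: "v \<in> fsp BR"
  have "\<And>x. Fx x (\<lambda>b. u (x, b) + v (x, b)) = (\<lambda>c. Fx x (\<lambda>b. u (x, b)) c + Fx x (\<lambda>b. v (x, b)) c)"
    by (rule lh_add[OF Fx_lh BR_slice[OF u] BR_slice[OF v]])
  then show "(\<lambda>p. \<Sum>x\<in>D. Fx x (\<lambda>b. u (x, b) + v (x, b)) p) = (\<lambda>c. (\<Sum>x\<in>D. Fx x (\<lambda>b. u (x, b)) c) + (\<Sum>x\<in>D. Fx x (\<lambda>b. v (x, b)) c))"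
    by (simp add: sum.distrib)
next
  fix a and v :: "'l \<times> 'l \<times> 'l \<times> 'b \<times> 'c \<Rightarrow> 'k" assume v: "v \<in> fsp BR"
  have "\<And>x. Fx x (\<lambda>b. smul a v (x, b)) = smul a (Fx x (\<lambda>b. v (x, b)))"
    using lh_smul[OF Fx_lh BR_slice[OF v]] by (simp add: smul_def)
  then show "(\<lambda>p. \<Sum>x\<in>D. Fx x (\<lambda>b. smul a v (x, b)) p) = smul a (\<lambda>p. \<Sum>x\<in>D. Fx x (\<lambda>b. v (x, b)) p)"
    by (simp add: smul_def sum_distrib_left)
qed

lemma FF_into: "v \<in> fsp BR \<Longrightarrow> FF v \<in> fsp BM"
  unfolding FF_def using D_fin D_car by (intro fsp_sum Fx_into BR_slice) auto

lemma FF_emb: assumes x: "x \<in> D" shows "FF (emb x w) = Fx x w"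
proof
  fix p
  have "FF (emb x w) p = (\<Sum>x'\<in>D. Fx x' (\<lambda>b. emb x w (x', b)) p)" by (simp add: FF_def)
  also have "\<dots> = Fx x (\<lambda>b. emb x w (x, b)) p"
    using D_fin x by (intro sum_single) (auto simp: emb_def Fx_def)
  also have "\<dots> = Fx x w p" by (simp add: emb_def)
  finally show "FF (emb x w) p = Fx x w p" .
qed

lemma \<rho>R_dl: assumes x: "x \<in> D" shows "\<rho>R k y (dl (x, b)) = emb x (\<rho>s x k y (dl b))"
proof
  fix p :: "'l \<times> 'l \<times> 'l \<times> 'b \<times> 'c"
  obtain i b' where p: "p = (i, b')" by (cases p) auto
  have z: "\<rho>s i k y (\<lambda>_. 0) = (\<lambda>_. 0)" by (simp add: indH_def)
  show "\<rho>R k y (dl (x, b)) p = emb x (\<rho>s x k y (dl b)) p"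
    using x z by (auto simp: p dsum_def emb_def dl_def)
qed

lemma \<rho>R_lh: "lh BR (\<rho>R k y)"
  unfolding lh_def dsum_def
proof (intro conjI ballI allI)
  fix u v :: "'l \<times> 'l \<times> 'l \<times> 'b \<times> 'c \<Rightarrow> 'k" assume u: "u \<in> fsp BR" and v: "v \<in> fsp BR"
  have "\<And>x. \<rho>s x k y (\<lambda>b. u (x, b) + v (x, b)) = (\<lambda>c. \<rho>s x k y (\<lambda>b. u (x, b)) c + \<rho>s x k y (\<lambda>b. v (x, b)) c)"
    by (rule lh_add[OF _ BR_slice[OF u] BR_slice[OF v]]) (simp add: indH_def lh_linext)
  then show "(\<lambda>(i, b). if i \<in> D then \<rho>s i k y (\<lambda>b'. u (i, b') + v (i, b')) b else 0) =
    (\<lambda>c. (case c of (i, b) \<Rightarrow> if i \<in> D then \<rho>s i k y (\<lambda>b'. u (i, b')) b else 0) + (case c of (i, b) \<Rightarrow> if i \<in> D then \<rho>s i k y (\<lambda>b'. v (i, b')) b else 0))"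
    by (auto simp: fun_eq_iff)
next
  fix a and v :: "'l \<times> 'l \<times> 'l \<times> 'b \<times> 'c \<Rightarrow> 'k" assume v: "v \<in> fsp BR"
  have "\<rho>s x k y (\<lambda>b. smul a v (x, b)) = smul a (\<rho>s x k y (\<lambda>b. v (x, b)))" for x
  proof -
    have l: "lh (BIx x) (\<rho>s x k y)" unfolding indH_def by (rule lh_linext)
    have "(\<lambda>b. smul a v (x, b)) = smul a (\<lambda>b. v (x, b))" by (simp add: smul_def)
    then show ?thesis using lh_smul[OF l BR_slice[OF v]] by simp
  qed
  then show "(\<lambda>(i, b). if i \<in> D then \<rho>s i k y (\<lambda>b'. smul a v (i, b')) b else 0) =
     smul a (\<lambda>(i, b). if i \<in> D then \<rho>s i k y (\<lambda>b'. v (i, b')) b else 0)"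
    by (auto simp: fun_eq_iff smul_def)
qed

lemma \<rho>R_into: assumes y: "y \<in> carrier L" and v: "v \<in> fsp BR" shows "\<rho>R k y v \<in> fsp BR"
proof -
  have "\<rho>R k y v = (\<lambda>p. \<Sum>x\<in>D. emb x (\<rho>s x k y (\<lambda>b. v (x, b))) p)"
  proof
    fix p :: "'l \<times> 'l \<times> 'l \<times> 'b \<times> 'c"
    obtain i b where p: "p = (i, b)" by (cases p) auto
    show "\<rho>R k y v p = (\<Sum>x\<in>D. emb x (\<rho>s x k y (\<lambda>b. v (x, b))) p)"
      using D_fin by (auto simp: p dsum_def emb_def sum.delta)
  qed
  also have "\<dots> \<in> fsp BR"
  proof (intro fsp_sum D_fin)
    fix x assume x: "x \<in> D"
    interpret U: indctx0 L G act \<sigma> \<tau> "gx x" "BUx x" "\<rho>Ux x" using U0 x D_car by auto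
    have "\<rho>s x k y (\<lambda>b. v (x, b)) \<in> fsp (BIx x)" by (rule U.rho_into[OF y BR_slice[OF v]])
    then have "emb x (\<rho>s x k y (\<lambda>b. v (x, b))) \<in> fsp ({x} \<times> BIx x)" by (intro fsp_emb) auto
    then show "emb x (\<rho>s x k y (\<lambda>b. v (x, b))) \<in> fsp BR"
      by (rule fsp_mono) (use x in \<open>auto simp: dsum_basis_def\<close>)
  qed
  finally show ?thesis .
qed

end




context mctx begin

lemma INT_basis:
  assumes xD: "x \<in> D" and r: "r \<in> ltrans L (carrier L) (Tx x)" and t: "t \<in> ltrans L (Tx x) (Kx x)"
    and vw: "vw \<in> BX" and k: "k \<in> carrier G" and y: "y \<in> carrier L"
  shows "FF (\<rho>R k y (dl (x, r, t, vw))) = \<rho>M k y (FF (dl (x, r, t, vw)))"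
proof -
  have x: "x \<in> carrier L" using xD D_car by auto
  interpret TK: transv L "Tx x" "Kx x" using TK_transv[OF x] .
  interpret U: indctx0 L G act \<sigma> \<tau> "gx x" "BUx x" "\<rho>Ux x" using U0[OF x] .
  let ?gh = "gx x"
  have gh: "?gh \<in> carrier G" using gx_in[OF x] .
  have rc: "r \<in> carrier L" using r U.T.lt_car by blast
  have tT: "t \<in> Tx x" using t TK.lt_sub by blast
  have tc: "t \<in> carrier L" using tT stab_car by blast
  have yr: "y \<otimes> r \<in> carrier L" using y rc by simp
  define r' where "r' = U.lr (y \<otimes> r)"
  define s where "s = inv r' \<otimes> (y \<otimes> r)"
  have P: "r' \<in> U.RR" "r' \<in> carrier L" "s \<in> Tx x" "r' \<otimes> s = y \<otimes> r"
    using U.lr_props[OF yr] unfolding r'_def s_def by auto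
  have sc: "s \<in> carrier L" using P stab_car by blast
  have st: "s \<otimes> t \<in> Tx x" using P(3) tT subgroup.m_closed[OF TK.subT] by blast
  define t' where "t' = lrep L (Tx x) (Kx x) (s \<otimes> t)"
  define s' where "s' = inv t' \<otimes> (s \<otimes> t)"
  have P': "t' \<in> ltrans L (Tx x) (Kx x)" "t' \<in> Tx x" "s' \<in> Kx x" "t' \<otimes> s' = s \<otimes> t"
    unfolding t'_def s'_def using TK.lrep_in[OF st] TK.lrep_S[OF st] TK.lrep_decomp[OF st] TK.lt_sub by auto
  have t'c: "t' \<in> carrier L" and s'c: "s' \<in> carrier L" using P' stab_car by auto
  have rt: "r \<otimes> t \<in> carrier L" using rc tc by simp
  have prod: "r' \<otimes> t' \<otimes> s' = y \<otimes> (r \<otimes> t)"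
  proof -
    have "r' \<otimes> t' \<otimes> s' = r' \<otimes> (t' \<otimes> s')" using P t'c s'c by (simp add: L.m_assoc)
    also have "\<dots> = r' \<otimes> s \<otimes> t" using P'(4) P(2) sc tc by (simp add: L.m_assoc)
    also have "\<dots> = y \<otimes> (r \<otimes> t)" using P y rc tc by (simp add: L.m_assoc)
    finally show ?thesis .
  qed
  have act_r': "act r' ?gh = act (y \<otimes> r) ?gh" using U.act_lr[OF yr] r'_def by simp
  have act_r't': "act (r' \<otimes> t') ?gh = act r' ?gh" using P P' gh stabD[OF P'(2)] t'c by (simp add: act_mult)
  have act_yrt: "act (y \<otimes> (r \<otimes> t)) ?gh = act (y \<otimes> r) ?gh"
    using y rc tc gh stabD[OF tT] by (simp add: act_mult L.m_assoc[symmetric])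
  have act_r: "act r ?gh = act (inv y) (act (y \<otimes> r) ?gh)" using y rc gh by (simp add: act_mult)
  have TPin: "TP x s' (dl vw) \<in> fsp BX" using TP_into[OF x P'(3) fsp_dl[OF vw]] .
  have RHS: "\<rho>M k y (FF (dl (x, r, t, vw))) = (if k = act (y \<otimes> r) ?gh then
      smul (\<sigma> (act r ?gh) r t * \<sigma> k y (r \<otimes> t)) (Q' x (y \<otimes> (r \<otimes> t)) (dl vw)) else (\<lambda>_. 0))"
  proof -
    have "FF (dl (x, r, t, vw)) = Fx x (emb r (emb t (dl vw)))"
      by (simp add: emb_dl[symmetric] FF_emb[OF xD])
    also have "\<dots> = smul (\<sigma> (act r ?gh) r t) (Q' x (r \<otimes> t) (dl vw))" by (rule Fx_emb2[OF fsp_dl[OF vw]])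
    finally have "\<rho>M k y (FF (dl (x, r, t, vw))) = smul (\<sigma> (act r ?gh) r t) (\<rho>M k y (Q' x (r \<otimes> t) (dl vw)))"
      using lh_smul[OF \<rho>M_lh Q'_into[OF x rt fsp_dl[OF vw]]] by simp
    also have "\<dots> = (if k = act (y \<otimes> r) ?gh then
      smul (\<sigma> (act r ?gh) r t * \<sigma> k y (r \<otimes> t)) (Q' x (y \<otimes> (r \<otimes> t)) (dl vw)) else (\<lambda>_. 0))"
      unfolding QA[OF x rt y k fsp_dl[OF vw]] act_yrt by (simp add: smul_smul)
    finally show ?thesis .
  qed
  have LHS: "FF (\<rho>R k y (dl (x, r, t, vw))) = (if k = act (y \<otimes> r) ?gh then
      smul (\<sigma> k y r / \<sigma> k r' s * (\<sigma> ?gh s t / \<sigma> ?gh t' s') * \<sigma> (act r' ?gh) r' t' * \<sigma> (act (r' \<otimes> t') ?gh) (r' \<otimes> t') s')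
        (Q' x (y \<otimes> (r \<otimes> t)) (dl vw)) else (\<lambda>_. 0))"
  proof -
    have "FF (\<rho>R k y (dl (x, r, t, vw))) = Fx x (\<rho>s x k y (emb r (dl (t, vw))))"
      by (simp add: \<rho>R_dl[OF xD] FF_emb[OF xD] emb_dl)
    also have "\<dots> = (if k = act (y \<otimes> r) ?gh then
        Fx x (smul (\<sigma> k y r / \<sigma> k r' s) (emb r' (\<rho>Ux x s (dl (t, vw))))) else (\<lambda>_. 0))"
    proof -
      have tvw: "(t, vw) \<in> BUx x" using t vw BUx_eq by auto
      show ?thesis
        unfolding U.indH_emb[OF k y r fsp_dl[OF tvw]] r'_def[symmetric] s_def[symmetric]
        by (simp add: Fx_def)
    qed
    also have "\<dots> = (if k = act (y \<otimes> r) ?gh then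
        Fx x (smul (\<sigma> k y r / \<sigma> k r' s * (\<sigma> ?gh s t / \<sigma> ?gh t' s')) (emb r' (emb t' (TP x s' (dl vw))))) else (\<lambda>_. 0))"
      unfolding indT_dl[OF x P(3)] t'_def[symmetric] s'_def[symmetric] by (simp add: emb_smul smul_smul)
    also have "\<dots> = (if k = act (y \<otimes> r) ?gh then
        smul (\<sigma> k y r / \<sigma> k r' s * (\<sigma> ?gh s t / \<sigma> ?gh t' s')) (smul (\<sigma> (act r' ?gh) r' t') (Q' x (r' \<otimes> t') (TP x s' (dl vw)))) else (\<lambda>_. 0))"
    proof -
      have "emb r' (emb t' (TP x s' (dl vw))) \<in> fsp UNIV"
        using fsp_emb[OF UNIV_I fsp_emb[OF UNIV_I TPin]] by (rule fsp_mono) simp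
      then show ?thesis using lh_smul[OF Fx_lh] Fx_emb2[OF TPin] by simp
    qed
    also have "\<dots> = (if k = act (y \<otimes> r) ?gh then
      smul (\<sigma> k y r / \<sigma> k r' s * (\<sigma> ?gh s t / \<sigma> ?gh t' s') * \<sigma> (act r' ?gh) r' t' * \<sigma> (act (r' \<otimes> t') ?gh) (r' \<otimes> t') s')
        (Q' x (y \<otimes> (r \<otimes> t)) (dl vw)) else (\<lambda>_. 0))"
    proof -
      have r't': "r' \<otimes> t' \<in> carrier L" using P t'c by simp
      have "Q' x (r' \<otimes> t') (TP x s' (dl vw)) = smul (\<sigma> (act (r' \<otimes> t') ?gh) (r' \<otimes> t') s') (Q' x (r' \<otimes> t' \<otimes> s') (dl vw))"
        by (rule QT[OF x r't' P'(3) fsp_dl[OF vw]])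
      then show ?thesis using prod by (simp add: smul_smul mult.assoc)
    qed
    finally show ?thesis .
  qed
  show ?thesis
  proof (cases "k = act (y \<otimes> r) ?gh")
    case False
    then show ?thesis using LHS RHS by simp
  next
    case True
    have kr': "act r' ?gh = k" using True act_r' by simp
    have k1: "act (inv r') k = ?gh" using kr' P gh by (metis act_inv_l)
    have k2: "act (inv y) k = act r ?gh" using True act_r by simp
    have c1: "\<sigma> k r' t' * \<sigma> k (r' \<otimes> t') s' = \<sigma> ?gh t' s' * \<sigma> k r' (s \<otimes> t)"
      using cocyc[OF k P(2) t'c s'c] k1 P' by simp
    have c2: "\<sigma> k r' s * \<sigma> k (y \<otimes> r) t = \<sigma> ?gh s t * \<sigma> k r' (s \<otimes> t)"
      using cocyc[OF k P(2) sc tc] k1 P by simp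
    have c3: "\<sigma> k y r * \<sigma> k (y \<otimes> r) t = \<sigma> (act r ?gh) r t * \<sigma> k y (r \<otimes> t)"
      using cocyc[OF k y rc tc] k2 by simp
    have nz: "\<sigma> k r' s \<noteq> 0" "\<sigma> ?gh t' s' \<noteq> 0" using \<sigma>_nz k gh P sc t'c s'c by auto
    have scal: "\<sigma> k y r / \<sigma> k r' s * (\<sigma> ?gh s t / \<sigma> ?gh t' s') * \<sigma> (act r' ?gh) r' t' * \<sigma> (act (r' \<otimes> t') ?gh) (r' \<otimes> t') s'
       = \<sigma> (act r ?gh) r t * \<sigma> k y (r \<otimes> t)"
    proof -
      have "\<sigma> k y r / \<sigma> k r' s * (\<sigma> ?gh s t / \<sigma> ?gh t' s') * \<sigma> (act r' ?gh) r' t' * \<sigma> (act (r' \<otimes> t') ?gh) (r' \<otimes> t') s'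
          = \<sigma> k y r * \<sigma> ?gh s t * (\<sigma> k r' t' * \<sigma> k (r' \<otimes> t') s') / (\<sigma> k r' s * \<sigma> ?gh t' s')"
        unfolding act_r't' kr' by (simp add: field_simps)
      also have "\<dots> = \<sigma> k y r * (\<sigma> ?gh s t * \<sigma> k r' (s \<otimes> t)) / \<sigma> k r' s"
        unfolding c1 using nz by (simp add: field_simps)
      also have "\<dots> = \<sigma> k y r * \<sigma> k (y \<otimes> r) t"
        unfolding c2[symmetric] using nz by (simp add: field_simps)
      also have "\<dots> = \<sigma> (act r ?gh) r t * \<sigma> k y (r \<otimes> t)" by (rule c3)
      finally show ?thesis .
    qed
    show ?thesis using LHS RHS True scal by simp
  qed
qed

lemma INT:
  assumes k: "k \<in> carrier G" and y: "y \<in> carrier L" and v: "v \<in> fsp BR"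
  shows "FF (\<rho>R k y v) = \<rho>M k y (FF v)"
proof (rule lh_ext[OF _ _ _ v])
  show "lh BR (\<lambda>v. FF (\<rho>R k y v))" using \<rho>R_lh \<rho>R_into[OF y] FF_lh by (rule lh_comp)
  show "lh BR (\<lambda>v. \<rho>M k y (FF v))" using FF_lh FF_into \<rho>M_lh by (rule lh_comp)
  fix b assume b: "b \<in> BR"
  then obtain x r t vw where q: "b = (x, r, t, vw)" "x \<in> D" "r \<in> ltrans L (carrier L) (Tx x)"
    "t \<in> ltrans L (Tx x) (Kx x)" "vw \<in> BX"
    by (auto simp: dsum_basis_def indH_basis_def BUx_eq)
  show "FF (\<rho>R k y (dl b)) = \<rho>M k y (FF (dl b))" unfolding q(1) by (rule INT_basis[OF q(2-5) k y])
qed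

end




context mctx begin

lemma stab_conj_rev: "x \<in> carrier L \<Longrightarrow> g \<in> carrier G \<Longrightarrow> z \<in> carrier L \<Longrightarrow> inv x \<otimes> z \<otimes> x \<in> stab L act g \<Longrightarrow> z \<in> stab L act (act x g)"
proof -
  assume x: "x \<in> carrier L" and g: "g \<in> carrier G" and z: "z \<in> carrier L" and s: "inv x \<otimes> z \<otimes> x \<in> stab L act g"
  have "act z (act x g) = act (x \<otimes> (inv x \<otimes> z \<otimes> x)) g"
    using x z g by (simp add: act_mult[symmetric] L.m_assoc)
  also have "\<dots> = act x (act (inv x \<otimes> z \<otimes> x) g)" using x z g by (simp add: act_mult)
  also have "\<dots> = act x g" using stabD[OF s] by simp
  finally show ?thesis using z by (simp add: stabI)
qed

lemma Kconj: "x \<in> carrier L \<Longrightarrow> k \<in> Kx x \<Longrightarrow> inv x \<otimes> k \<otimes> x \<in> W.Lg"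
  using stab_conj[OF _ gj_in] by blast

definition "good x l r1 r2 \<longleftrightarrow> V.lr l = r1 \<and> W.lr (l \<otimes> x) = r2"

lemma good_dc:
  assumes x: "x \<in> carrier L" and l: "l \<in> carrier L" and gd: "good x l r1 r2"
  shows "inv r1 \<otimes> r2 \<in> dcoset L V.Lg x W.Lg"
proof -
  have lx: "l \<otimes> x \<in> carrier L" using l x by simp
  have r1: "r1 \<in> carrier L" and a: "inv r1 \<otimes> l \<in> V.Lg"
    using V.lr_props[OF l] gd by (auto simp: good_def)
  have r2: "r2 \<in> carrier L" and b: "inv r2 \<otimes> (l \<otimes> x) \<in> W.Lg"
    using W.lr_props[OF lx] gd by (auto simp: good_def)
  have bi: "inv (inv r2 \<otimes> (l \<otimes> x)) \<in> W.Lg" using b subgroup.m_inv_closed[OF stab_subgroup[OF gj_in]] by blast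
  have "(inv r1 \<otimes> l) \<otimes> x \<otimes> inv (inv r2 \<otimes> (l \<otimes> x)) = inv r1 \<otimes> (l \<otimes> x) \<otimes> (inv (l \<otimes> x) \<otimes> r2)"
    using r1 r2 l x by (simp add: L.inv_mult_group L.m_assoc)
  also have "\<dots> = inv r1 \<otimes> r2" using r1 r2 lx by (simp add: L.m_assoc)
  finally have "inv r1 \<otimes> r2 = (inv r1 \<otimes> l) \<otimes> x \<otimes> inv (inv r2 \<otimes> (l \<otimes> x))" by simp
  then show ?thesis using a bi unfolding dcoset_def by blast
qed

lemma good_unique_x:
  assumes "x \<in> D" "x' \<in> D" "l \<in> carrier L" "l' \<in> carrier L" "good x l r1 r2" "good x' l' r1 r2"
  shows "x = x'"
proof -
  have xc: "x \<in> carrier L" "x' \<in> carrier L" using assms D_car by auto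
  have "r1 \<in> carrier L" using V.lr_props[OF assms(3)] assms(5) by (simp add: good_def)
  moreover have "l \<otimes> x \<in> carrier L" using assms(3) xc by simp
  then have "r2 \<in> carrier L" using W.lr_props[of "l \<otimes> x"] assms(5) by (simp add: good_def)
  ultimately have y: "inv r1 \<otimes> r2 \<in> carrier L" by simp
  have "\<exists>!z\<in>D. inv r1 \<otimes> r2 \<in> dcoset L V.Lg z W.Lg" using dreps y by (simp add: dcoset_reps_def)
  then show ?thesis using good_dc[OF xc(1) assms(3,5)] good_dc[OF xc(2) assms(4,6)] assms(1,2) by blast
qed

lemma good_K:
  assumes x: "x \<in> carrier L" and l: "l \<in> carrier L" and l': "l' \<in> carrier L"
    and g1: "good x l r1 r2" and g2: "good x l' r1 r2"
  shows "inv l \<otimes> l' \<in> Kx x"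
proof -
  have lx: "l \<otimes> x \<in> carrier L" "l' \<otimes> x \<in> carrier L" using l l' x by auto
  have r1: "r1 \<in> carrier L" using V.lr_props[OF l] g1 by (simp add: good_def)
  have a: "inv r1 \<otimes> l \<in> V.Lg" "inv r1 \<otimes> l' \<in> V.Lg"
    using V.lr_props[OF l] V.lr_props[OF l'] g1 g2 by (simp_all add: good_def)
  have i: "inv l \<otimes> l' \<in> V.Lg"
    using V.T.S_trans[OF l r1 l' V.T.inv_S_swap[OF r1 l a(1)] a(2)] .
  have r2: "r2 \<in> carrier L" using W.lr_props[OF lx(1)] g1 by (simp add: good_def)
  have b: "inv r2 \<otimes> (l \<otimes> x) \<in> W.Lg" "inv r2 \<otimes> (l' \<otimes> x) \<in> W.Lg"
    using W.lr_props[OF lx(1)] W.lr_props[OF lx(2)] g1 g2 by (simp_all add: good_def)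
  have j: "inv (l \<otimes> x) \<otimes> (l' \<otimes> x) \<in> W.Lg"
    using W.T.S_trans[OF lx(1) r2 lx(2) W.T.inv_S_swap[OF r2 lx(1) b(1)] b(2)] .
  have "inv (l \<otimes> x) \<otimes> (l' \<otimes> x) = inv x \<otimes> (inv l \<otimes> l') \<otimes> x"
    using l l' x by (simp add: L.inv_mult_group L.m_assoc)
  then have "inv l \<otimes> l' \<in> stab L act (act x gj)" using j stab_conj_rev[OF x gj_in] l l' by simp
  then show ?thesis using i by simp
qed

lemma good_mult:
  assumes x: "x \<in> carrier L" and l: "l \<in> carrier L" and k: "k \<in> Kx x" and gd: "good x l r1 r2"
  shows "good x (l \<otimes> k) r1 r2"
proof -
  have kc: "k \<in> carrier L" using k by (auto simp: stab_def)
  have kV: "k \<in> V.Lg" using k by simp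
  have kW: "inv x \<otimes> k \<otimes> x \<in> W.Lg" using Kconj[OF x k] .
  have "V.lr (l \<otimes> k) = V.lr l" using V.T.lrep_mult l kV by simp
  moreover have "l \<otimes> k \<otimes> x = l \<otimes> x \<otimes> (inv x \<otimes> k \<otimes> x)" using l kc x by (simp add: L.m_assoc)
  then have "W.lr (l \<otimes> k \<otimes> x) = W.lr (l \<otimes> x)" using W.T.lrep_mult l x kW by simp
  ultimately show ?thesis using gd by (simp add: good_def)
qed

definition "bx r1 r2 = (THE x. x \<in> D \<and> inv r1 \<otimes> r2 \<in> dcoset L V.Lg x W.Lg)"
definition "bl0 r1 r2 = (SOME l. l \<in> carrier L \<and> good (bx r1 r2) l r1 r2)"
definition "br r1 r2 = lrep L (carrier L) (Tx (bx r1 r2)) (bl0 r1 r2)"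
definition "bt r1 r2 = lrep L (Tx (bx r1 r2)) (Kx (bx r1 r2)) (inv (br r1 r2) \<otimes> bl0 r1 r2)"

lemma block_ex:
  assumes r1: "r1 \<in> V.RR" and r2: "r2 \<in> W.RR"
  shows "bx r1 r2 \<in> D \<and> bl0 r1 r2 \<in> carrier L \<and> good (bx r1 r2) (bl0 r1 r2) r1 r2"
proof -
  have r1c: "r1 \<in> carrier L" and r2c: "r2 \<in> carrier L" using r1 r2 V.T.lt_car W.T.lt_car by auto
  have y: "inv r1 \<otimes> r2 \<in> carrier L" using r1c r2c by simp
  have e: "\<exists>!z. z \<in> D \<and> inv r1 \<otimes> r2 \<in> dcoset L V.Lg z W.Lg" using dreps y by (auto simp: dcoset_reps_def)
  have bx: "bx r1 r2 \<in> D \<and> inv r1 \<otimes> r2 \<in> dcoset L V.Lg (bx r1 r2) W.Lg"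
    unfolding bx_def by (rule theI'[OF e])
  let ?x = "bx r1 r2"
  have xc: "?x \<in> carrier L" using bx D_car by auto
  obtain a b where ab: "a \<in> V.Lg" "b \<in> W.Lg" "inv r1 \<otimes> r2 = a \<otimes> ?x \<otimes> b"
    using bx unfolding dcoset_def by blast
  have ac: "a \<in> carrier L" and bc: "b \<in> carrier L" using ab by (auto simp: stab_def)
  define l where "l = r1 \<otimes> a"
  have lc: "l \<in> carrier L" using r1c ac l_def by simp
  have g1: "V.lr l = r1"
    using V.T.lrep_unique[OF _ r1] lc r1c ac ab(1) l_def by simp
  have "l \<otimes> ?x = r2 \<otimes> inv b"
  proof -
    have e: "r2 = r1 \<otimes> (a \<otimes> ?x \<otimes> b)" using ab(3)[symmetric] r1c r2c by simp
    have "r2 \<otimes> inv b = r1 \<otimes> (a \<otimes> ?x \<otimes> b) \<otimes> inv b" by (subst e) (rule refl)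
    also have "\<dots> = r1 \<otimes> a \<otimes> ?x" using r1c ac xc bc by (simp add: L.m_assoc)
    finally have "r2 \<otimes> inv b = r1 \<otimes> a \<otimes> ?x" .
    then show ?thesis using l_def by simp
  qed
  moreover have "W.lr (r2 \<otimes> inv b) = r2"
    using W.T.lrep_unique[OF _ r2] r2c bc subgroup.m_inv_closed[OF stab_subgroup[OF gj_in] ab(2)] by simp
  ultimately have g2: "W.lr (l \<otimes> ?x) = r2" by simp
  have "\<exists>l. l \<in> carrier L \<and> good ?x l r1 r2" using lc g1 g2 by (auto simp: good_def)
  then have "bl0 r1 r2 \<in> carrier L \<and> good ?x (bl0 r1 r2) r1 r2" unfolding bl0_def by (rule someI_ex)
  then show ?thesis using bx by simp
qed

lemma block_props:
  assumes r1: "r1 \<in> V.RR" and r2: "r2 \<in> W.RR"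
  shows "bx r1 r2 \<in> D \<and> br r1 r2 \<in> ltrans L (carrier L) (Tx (bx r1 r2)) \<and>
    bt r1 r2 \<in> ltrans L (Tx (bx r1 r2)) (Kx (bx r1 r2)) \<and> good (bx r1 r2) (br r1 r2 \<otimes> bt r1 r2) r1 r2"
proof -
  let ?x = "bx r1 r2" and ?l0 = "bl0 r1 r2" and ?r = "br r1 r2" and ?t = "bt r1 r2"
  have B: "?x \<in> D" "?l0 \<in> carrier L" "good ?x ?l0 r1 r2" using block_ex[OF r1 r2] by auto
  have xc: "?x \<in> carrier L" using B D_car by auto
  interpret TK: transv L "Tx ?x" "Kx ?x" using TK_transv[OF xc] .
  interpret U: indctx0 L G act \<sigma> \<tau> "gx ?x" "BUx ?x" "\<rho>Ux ?x" using U0[OF xc] .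
  have rP: "?r \<in> U.RR" "?r \<in> carrier L" "inv ?r \<otimes> ?l0 \<in> Tx ?x"
    using U.lr_props[OF B(2)] unfolding br_def by auto
  have tP: "?t \<in> ltrans L (Tx ?x) (Kx ?x)" "inv ?t \<otimes> (inv ?r \<otimes> ?l0) \<in> Kx ?x"
    using TK.lrep_in[OF rP(3)] TK.lrep_S[OF rP(3)] unfolding bt_def by auto
  have tc: "?t \<in> carrier L" using tP TK.lt_car by blast
  define k where "k = inv ?t \<otimes> (inv ?r \<otimes> ?l0)"
  have kK: "k \<in> Kx ?x" using tP k_def by simp
  have kc: "k \<in> carrier L" using kK by (auto simp: stab_def)
  have kinv: "inv k \<in> Kx ?x"
    using kK subgroup.m_inv_closed[OF TK.subS] by blast
  have "?l0 \<otimes> inv k = ?r \<otimes> ?t"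
  proof -
    have "?l0 = ?r \<otimes> ?t \<otimes> k" using rP tc B(2) k_def by (simp add: L.m_assoc)
    then show ?thesis using rP tc kc by (simp add: L.m_assoc)
  qed
  moreover have "good ?x (?l0 \<otimes> inv k) r1 r2" by (rule good_mult[OF xc B(2) kinv B(3)])
  ultimately show ?thesis using B rP tP by simp
qed

lemma block_unique:
  assumes xD: "x \<in> D" and r: "r \<in> ltrans L (carrier L) (Tx x)" and t: "t \<in> ltrans L (Tx x) (Kx x)"
    and r1: "r1 \<in> V.RR" and r2: "r2 \<in> W.RR" and gd: "good x (r \<otimes> t) r1 r2"
  shows "bx r1 r2 = x \<and> br r1 r2 = r \<and> bt r1 r2 = t"
proof -
  have xc: "x \<in> carrier L" using xD D_car by auto
  interpret TK: transv L "Tx x" "Kx x" using TK_transv[OF xc] .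
  interpret U: indctx0 L G act \<sigma> \<tau> "gx x" "BUx x" "\<rho>Ux x" using U0[OF xc] .
  have rc: "r \<in> carrier L" using r U.T.lt_car by blast
  have tT: "t \<in> Tx x" using t TK.lt_sub by blast
  have tc: "t \<in> carrier L" using t TK.lt_car by blast
  have rt: "r \<otimes> t \<in> carrier L" using rc tc by simp
  have B: "bx r1 r2 \<in> D" "bl0 r1 r2 \<in> carrier L" "good (bx r1 r2) (bl0 r1 r2) r1 r2" using block_ex[OF r1 r2] by auto
  have bxx: "bx r1 r2 = x" using good_unique_x[OF B(1) xD B(2) rt B(3) gd] .
  let ?l0 = "bl0 r1 r2"
  have kK: "inv (r \<otimes> t) \<otimes> ?l0 \<in> Kx x" using good_K[OF xc rt B(2) gd] B(3) bxx by simp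
  define k where "k = inv (r \<otimes> t) \<otimes> ?l0"
  have kc: "k \<in> carrier L" using kK k_def by (auto simp: stab_def)
  have l0: "?l0 = r \<otimes> (t \<otimes> k)" using rc tc B(2) k_def by (simp add: L.m_assoc[symmetric] L.inv_mult_group)
  have tk: "t \<otimes> k \<in> Tx x" using tT kK TK.ST subgroup.m_closed[OF TK.subT] k_def by blast
  have brr: "br r1 r2 = r"
    unfolding br_def bxx l0 using U.T.lrep_unique[OF _ r] rc tc kc tk by simp
  have btt: "bt r1 r2 = t"
    unfolding bt_def bxx brr l0 using TK.lrep_unique[OF tk t] rc tc kc kK k_def by simp
  show ?thesis using bxx brr btt by simp
qed

end




lemma lh_embf: "lh B f \<Longrightarrow> lh B (\<lambda>a. emb r (f a))"
  using lh_smul_emb[of B f 1 r] by simp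

lemma linext_vt_emb:
  assumes a: "a \<in> fsp B" and b: "b \<in> fsp C"
  shows "linext F (vt (emb r1 a) (emb r2 b)) = linext (\<lambda>(v, w). F ((r1, v), (r2, w))) (vt a b)"
proof -
  let ?S = "{v. a v \<noteq> 0} \<times> {w. b w \<noteq> 0}"
  let ?h = "\<lambda>(v, w). ((r1, v), (r2, w))"
  have fin: "finite ?S" using a b by (auto simp: fsp_def)
  have "linext F (vt (emb r1 a) (emb r2 b)) = (\<lambda>y. \<Sum>p\<in>?h ` ?S. vt (emb r1 a) (emb r2 b) p * F p y)"
    using fin by (intro linext_gen) (auto simp: vt_def emb_def split: if_splits)
  also have "\<dots> = (\<lambda>y. \<Sum>p\<in>?S. vt a b p * (case p of (v, w) \<Rightarrow> F ((r1, v), (r2, w))) y)"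
    by (subst sum.reindex) (auto simp: inj_on_def vt_def emb_def intro!: sum.cong)
  also have "\<dots> = linext (\<lambda>(v, w). F ((r1, v), (r2, w))) (vt a b)"
    using fin by (intro linext_gen[symmetric]) (auto simp: vt_def)
  finally show ?thesis .
qed

context mctx begin

definition "bl r1 r2 = br r1 r2 \<otimes> bt r1 r2"
definition "sV r1 r2 = inv r1 \<otimes> bl r1 r2"
definition "sW r1 r2 = inv r2 \<otimes> (bl r1 r2 \<otimes> bx r1 r2)"
definition "cF r1 r2 = \<sigma> (act (br r1 r2) (gx (bx r1 r2))) (br r1 r2) (bt r1 r2) * cQ (bx r1 r2) (bl r1 r2)
   * inverse (\<sigma> (act (bl r1 r2) gi) r1 (sV r1 r2)) * inverse (\<sigma> (act (bl r1 r2 \<otimes> bx r1 r2) gj) r2 (sW r1 r2))"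
definition "Apre r1 r2 a = smul (inverse (\<sigma> gi (sV r1 r2) (inv (sV r1 r2)))) (\<rho>V (inv (sV r1 r2)) a)"
definition "Bpre r1 r2 b = smul (inverse (\<sigma> gj (sW r1 r2) (inv (sW r1 r2)))) (\<rho>W (inv (sW r1 r2)) b)"
definition "PRE r1 r2 a b = smul (inverse (cF r1 r2))
   (emb (bx r1 r2) (emb (br r1 r2) (emb (bt r1 r2) (vt (Apre r1 r2 a) (Bpre r1 r2 b)))))"
definition "GG = linext (\<lambda>((r1, v), (r2, w)). PRE r1 r2 (dl v) (dl w))"

lemma EMB3_fsp:
  assumes xD: "x \<in> D" and r: "r \<in> ltrans L (carrier L) (Tx x)" and t: "t \<in> ltrans L (Tx x) (Kx x)" and z: "z \<in> fsp BX"
  shows "emb x (emb r (emb t z)) \<in> fsp BR"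
proof -
  have "emb r (emb t z) \<in> fsp (BIx x)"
    unfolding indH_basis_def BUx_eq using r t z by (intro fsp_emb) auto
  then have "emb x (emb r (emb t z)) \<in> fsp ({x} \<times> BIx x)" by (intro fsp_emb) auto
  then show ?thesis by (rule fsp_mono) (use xD in \<open>auto simp: dsum_basis_def\<close>)
qed

lemma FF_emb3:
  assumes xD: "x \<in> D" and z: "z \<in> fsp BX"
  shows "FF (emb x (emb r (emb t z))) = smul (\<sigma> (act r (gx x)) r t * cQ x (r \<otimes> t)) (Q x (r \<otimes> t) z)"
  using FF_emb[OF xD] Fx_emb2[OF z] by (simp add: Q'_def smul_smul)

lemma block_data:
  assumes r1: "r1 \<in> V.RR" and r2: "r2 \<in> W.RR"
  shows "bx r1 r2 \<in> D" "br r1 r2 \<in> ltrans L (carrier L) (Tx (bx r1 r2))"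
    "bt r1 r2 \<in> ltrans L (Tx (bx r1 r2)) (Kx (bx r1 r2))"
    "bl r1 r2 \<in> carrier L" "bx r1 r2 \<in> carrier L"
    "V.lr (bl r1 r2) = r1" "W.lr (bl r1 r2 \<otimes> bx r1 r2) = r2"
    "sV r1 r2 \<in> V.Lg" "sW r1 r2 \<in> W.Lg" "sV r1 r2 \<in> carrier L" "sW r1 r2 \<in> carrier L"
    "br r1 r2 \<in> carrier L" "bt r1 r2 \<in> carrier L"
proof -
  note B = block_props[OF r1 r2]
  let ?x = "bx r1 r2"
  show xD: "?x \<in> D" using B by simp
  show "br r1 r2 \<in> ltrans L (carrier L) (Tx (bx r1 r2))" "bt r1 r2 \<in> ltrans L (Tx (bx r1 r2)) (Kx (bx r1 r2))"
    using B by auto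
  show xc: "?x \<in> carrier L" using xD D_car by auto
  interpret TK: transv L "Tx ?x" "Kx ?x" using TK_transv[OF xc] .
  interpret U: indctx0 L G act \<sigma> \<tau> "gx ?x" "BUx ?x" "\<rho>Ux ?x" using U0[OF xc] .
  show "br r1 r2 \<in> carrier L" "bt r1 r2 \<in> carrier L" using B U.T.lt_car TK.lt_car by auto
  then show lc: "bl r1 r2 \<in> carrier L" by (simp add: bl_def)
  show g1: "V.lr (bl r1 r2) = r1" "W.lr (bl r1 r2 \<otimes> bx r1 r2) = r2"
    using B by (auto simp: good_def bl_def)
  show "sV r1 r2 \<in> V.Lg" using V.lr_props[OF lc] g1 by (simp add: sV_def)
  then show "sV r1 r2 \<in> carrier L" by (simp add: stab_def)
  have "bl r1 r2 \<otimes> bx r1 r2 \<in> carrier L" using lc xc by simp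
  then show "sW r1 r2 \<in> W.Lg" using W.lr_props[of "bl r1 r2 \<otimes> bx r1 r2"] g1 by (simp add: sW_def)
  then show "sW r1 r2 \<in> carrier L" by (simp add: stab_def)
qed

lemma cF_nz: assumes r1: "r1 \<in> V.RR" and r2: "r2 \<in> W.RR" shows "cF r1 r2 \<noteq> 0"
proof -
  note bd = block_data[OF r1 r2]
  have "r1 \<in> carrier L" "r2 \<in> carrier L" using r1 r2 V.T.lt_car W.T.lt_car by auto
  then show ?thesis unfolding cF_def using bd \<sigma>_nz cQ_nz gi_in gj_in gx_in by auto
qed

end




lemma lh_id: "lh B (\<lambda>v. v)" by (simp add: lh_def)

context indctx begin

lemma inv_Lg: "s \<in> Lg \<Longrightarrow> inv s \<in> Lg"
  using subgroup.m_inv_closed[OF stab_subgroup[OF g_in]] by blast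

lemma U_invL: assumes s: "s \<in> Lg" and a: "a \<in> fsp BU"
  shows "\<rho>U s (smul (inverse (\<sigma> g s (inv s))) (\<rho>U (inv s) a)) = a"
proof -
  have sc: "s \<in> carrier L" using s Lg_car by blast
  have "\<rho>U s (smul (inverse (\<sigma> g s (inv s))) (\<rho>U (inv s) a)) = smul (inverse (\<sigma> g s (inv s))) (\<rho>U s (\<rho>U (inv s) a))"
    using lh_smul[OF U_lh[OF s] U_into[OF inv_Lg[OF s] a]] .
  also have "\<dots> = smul (inverse (\<sigma> g s (inv s)) * \<sigma> g s (inv s)) a"
    using U_mult[OF s inv_Lg[OF s] a] sc U_one[OF a] by (simp add: smul_smul)
  also have "\<dots> = a" using \<sigma>_nz[OF g_in sc] sc by simp
  finally show ?thesis .
qed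

lemma U_invR: assumes s: "s \<in> Lg" and a: "a \<in> fsp BU"
  shows "smul (inverse (\<sigma> g s (inv s))) (\<rho>U (inv s) (\<rho>U s a)) = a"
proof -
  have sc: "s \<in> carrier L" using s Lg_car by blast
  have sw: "\<sigma> g (inv s) s = \<sigma> g s (inv s)" using sigma_inv_swap[OF sc g_in] Lg_act[OF s] by simp
  have "\<rho>U (inv s) (\<rho>U s a) = smul (\<sigma> g s (inv s)) a"
    using U_mult[OF inv_Lg[OF s] s a] sc U_one[OF a] sw by simp
  then show ?thesis using \<sigma>_nz[OF g_in sc] sc by (simp add: smul_smul)
qed

lemma U_inv_lh: "s \<in> Lg \<Longrightarrow> lh BU (\<lambda>a. smul c (\<rho>U (inv s) a))"
  using lh_smulf[OF U_lh[OF inv_Lg]] by blast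

lemma U_inv_into: "s \<in> Lg \<Longrightarrow> a \<in> fsp BU \<Longrightarrow> smul c (\<rho>U (inv s) a) \<in> fsp BU"
  using fsp_smul U_into inv_Lg by blast

end

context mctx begin

lemma PRE_fsp:
  assumes r1: "r1 \<in> V.RR" and r2: "r2 \<in> W.RR" and a: "a \<in> fsp BV" and b: "b \<in> fsp BW"
  shows "PRE r1 r2 a b \<in> fsp BR"
proof -
  note bd = block_data[OF r1 r2]
  have "vt (Apre r1 r2 a) (Bpre r1 r2 b) \<in> fsp BX"
    unfolding Apre_def Bpre_def using bd a b by (intro fsp_vt V.U_inv_into W.U_inv_into) auto
  then show ?thesis unfolding PRE_def using bd by (intro fsp_smul EMB3_fsp) auto
qed

lemma PRE_bil: assumes r1: "r1 \<in> V.RR" and r2: "r2 \<in> W.RR" shows "bilh BV BW (PRE r1 r2)"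
proof -
  note bd = block_data[OF r1 r2]
  have A: "lh BV (Apre r1 r2)" unfolding Apre_def using V.U_inv_lh bd by blast
  have B: "lh BW (Bpre r1 r2)" unfolding Bpre_def using W.U_inv_lh bd by blast
  show ?thesis unfolding bilh_def PRE_def
    by (intro conjI ballI lh_smulf lh_embf lh_vt1 lh_vt2 A B)
qed

lemma GG_lh: "lh BM GG" unfolding GG_def by (rule lh_linext)

lemma GG_into: "m \<in> fsp BM \<Longrightarrow> GG m \<in> fsp BR"
  unfolding GG_def
proof (rule linext_into)
  fix p assume "p \<in> BM"
  then obtain r1 v r2 w where p: "p = ((r1, v), (r2, w))" "r1 \<in> V.RR" "v \<in> BV" "r2 \<in> W.RR" "w \<in> BW"
    by (auto simp: tensH_basis_def V.BI_eq W.BI_eq)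
  show "(\<lambda>((r1, v), (r2, w)). PRE r1 r2 (dl v) (dl w)) p \<in> fsp BR"
    using p PRE_fsp by auto
qed

lemma GG_vt_emb: assumes r1: "r1 \<in> V.RR" and r2: "r2 \<in> W.RR" and a: "a \<in> fsp BV" and b: "b \<in> fsp BW"
  shows "GG (vt (emb r1 a) (emb r2 b)) = PRE r1 r2 a b"
  unfolding GG_def linext_vt_emb[OF a b] using linext_bil[OF PRE_bil[OF r1 r2] a b] by simp

lemma VE_block: assumes l: "l \<in> carrier L" and lr: "V.lr l = r1"
  shows "V.E l a = smul (inverse (\<sigma> (act l gi) r1 (inv r1 \<otimes> l))) (emb r1 (\<rho>V (inv r1 \<otimes> l) a))"
  using lr by (simp add: V.E_def)

lemma WE_block: assumes l: "l \<in> carrier L" and lr: "W.lr l = r2"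
  shows "W.E l b = smul (inverse (\<sigma> (act l gj) r2 (inv r2 \<otimes> l))) (emb r2 (\<rho>W (inv r2 \<otimes> l) b))"
  using lr by (simp add: W.E_def)

lemma FF_GG_basis:
  assumes r1: "r1 \<in> V.RR" and v: "v \<in> BV" and r2: "r2 \<in> W.RR" and w: "w \<in> BW"
  shows "FF (GG (dl ((r1, v), (r2, w)))) = dl ((r1, v), (r2, w))"
proof -
  note bd = block_data[OF r1 r2]
  let ?x = "bx r1 r2" and ?r = "br r1 r2" and ?t = "bt r1 r2" and ?l = "bl r1 r2"
  let ?A = "Apre r1 r2 (dl v)" and ?B = "Bpre r1 r2 (dl w)"
  have Af: "?A \<in> fsp BV" and Bf: "?B \<in> fsp BW"
    unfolding Apre_def Bpre_def using bd v w by (auto intro!: V.U_inv_into W.U_inv_into)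
  have lx: "?l \<otimes> ?x \<in> carrier L" using bd by simp
  have EA: "V.E ?l ?A = smul (inverse (\<sigma> (act ?l gi) r1 (sV r1 r2))) (emb r1 (dl v))"
    using VE_block[OF bd(4) bd(6)] V.U_invL[OF bd(8) fsp_dl[OF v]] by (simp add: sV_def Apre_def)
  have EB: "W.E (?l \<otimes> ?x) ?B = smul (inverse (\<sigma> (act (?l \<otimes> ?x) gj) r2 (sW r1 r2))) (emb r2 (dl w))"
    using WE_block[OF lx bd(7)] W.U_invL[OF bd(9) fsp_dl[OF w]] by (simp add: sW_def Bpre_def)
  have Yf: "emb ?x (emb ?r (emb ?t (vt ?A ?B))) \<in> fsp BR"
    using bd Af Bf by (intro EMB3_fsp fsp_vt) auto
  have "FF (GG (dl ((r1, v), (r2, w)))) = FF (PRE r1 r2 (dl v) (dl w))" by (simp add: GG_def)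
  also have "\<dots> = smul (inverse (cF r1 r2)) (FF (emb ?x (emb ?r (emb ?t (vt ?A ?B)))))"
    unfolding PRE_def by (rule lh_smul[OF FF_lh Yf])
  also have "\<dots> = smul (inverse (cF r1 r2)) (smul (\<sigma> (act ?r (gx ?x)) ?r ?t * cQ ?x ?l) (vt (V.E ?l ?A) (W.E (?l \<otimes> ?x) ?B)))"
    using FF_emb3[OF bd(1) fsp_vt[OF Af Bf]] Q_vt[OF bd(5) bd(4) Af Bf] by (simp add: bl_def)
  also have "\<dots> = smul (inverse (cF r1 r2) * cF r1 r2) (vt (emb r1 (dl v)) (emb r2 (dl w)))"
    unfolding EA EB by (simp add: vt_smul1 vt_smul2 smul_smul cF_def mult_ac)
  also have "\<dots> = dl ((r1, v), (r2, w))" using cF_nz[OF r1 r2] by (simp add: emb_dl vt_dl)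
  finally show ?thesis .
qed

lemma GG_FF_basis:
  assumes xD: "x \<in> D" and r: "r \<in> ltrans L (carrier L) (Tx x)" and t: "t \<in> ltrans L (Tx x) (Kx x)"
    and v: "v \<in> BV" and w: "w \<in> BW"
  shows "GG (FF (dl (x, r, t, v, w))) = dl (x, r, t, v, w)"
proof -
  have xc: "x \<in> carrier L" using xD D_car by auto
  interpret TK: transv L "Tx x" "Kx x" using TK_transv[OF xc] .
  interpret U: indctx0 L G act \<sigma> \<tau> "gx x" "BUx x" "\<rho>Ux x" using U0[OF xc] .
  have rc: "r \<in> carrier L" using r U.T.lt_car by blast
  have tc: "t \<in> carrier L" using t TK.lt_car by blast
  define l where "l = r \<otimes> t"
  have lc: "l \<in> carrier L" using rc tc l_def by simp
  have lx: "l \<otimes> x \<in> carrier L" using lc xc by simp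
  define r1 where "r1 = V.lr l"
  define r2 where "r2 = W.lr (l \<otimes> x)"
  have r1P: "r1 \<in> V.RR" "r1 \<in> carrier L" using V.lr_props[OF lc] r1_def by auto
  have r2P: "r2 \<in> W.RR" "r2 \<in> carrier L" using W.lr_props[OF lx] r2_def by auto
  have gd: "good x (r \<otimes> t) r1 r2" using r1_def r2_def l_def by (simp add: good_def)
  have bu: "bx r1 r2 = x" "br r1 r2 = r" "bt r1 r2 = t" using block_unique[OF xD r t r1P(1) r2P(1) gd] by auto
  have blx: "bl r1 r2 = l" using bu by (simp add: bl_def l_def)
  have sVe: "sV r1 r2 = inv r1 \<otimes> l" and sWe: "sW r1 r2 = inv r2 \<otimes> (l \<otimes> x)"
    using blx bu by (simp_all add: sV_def sW_def)
  note bd = block_data[OF r1P(1) r2P(1)]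
  have sVL: "inv r1 \<otimes> l \<in> V.Lg" and sWL: "inv r2 \<otimes> (l \<otimes> x) \<in> W.Lg" using bd sVe sWe by auto
  let ?a = "\<rho>V (inv r1 \<otimes> l) (dl v)" and ?b = "\<rho>W (inv r2 \<otimes> (l \<otimes> x)) (dl w)"
  have af: "?a \<in> fsp BV" and bf: "?b \<in> fsp BW" using V.U_into[OF sVL fsp_dl[OF v]] W.U_into[OF sWL fsp_dl[OF w]] by auto
  have Xf: "vt (emb r1 ?a) (emb r2 ?b) \<in> fsp BM"
    unfolding tensH_basis_def V.BI_eq W.BI_eq using r1P r2P af bf by (intro fsp_vt fsp_emb) auto
  have "FF (dl (x, r, t, v, w)) = FF (emb x (emb r (emb t (dl (v, w)))))" by (simp add: emb_dl)
  also have "\<dots> = smul (\<sigma> (act r (gx x)) r t * cQ x l) (Q x l (dl (v, w)))"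
    using FF_emb3[OF xD fsp_dl[of "(v, w)" BX]] v w l_def by simp
  also have "\<dots> = smul (\<sigma> (act r (gx x)) r t * cQ x l) (vt (V.E l (dl v)) (W.E (l \<otimes> x) (dl w)))"
    by (simp add: Q_def)
  also have "\<dots> = smul (cF r1 r2) (vt (emb r1 ?a) (emb r2 ?b))"
    unfolding VE_block[OF lc r1_def[symmetric]] WE_block[OF lx r2_def[symmetric]]
    by (simp add: vt_smul1 vt_smul2 smul_smul cF_def bu blx sVe sWe mult_ac)
  finally have "GG (FF (dl (x, r, t, v, w))) = smul (cF r1 r2) (GG (vt (emb r1 ?a) (emb r2 ?b)))"
    using lh_smul[OF GG_lh Xf] by simp
  also have "\<dots> = smul (cF r1 r2) (PRE r1 r2 ?a ?b)" using GG_vt_emb[OF r1P(1) r2P(1) af bf] by simp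
  also have "\<dots> = smul (cF r1 r2 * inverse (cF r1 r2)) (emb x (emb r (emb t (vt (dl v) (dl w)))))"
    unfolding PRE_def Apre_def Bpre_def sVe sWe bu
    using V.U_invR[OF sVL fsp_dl[OF v]] W.U_invR[OF sWL fsp_dl[OF w]] by (simp add: smul_smul)
  also have "\<dots> = dl (x, r, t, v, w)" using cF_nz[OF r1P(1) r2P(1)] by (simp add: vt_dl emb_dl)
  finally show ?thesis .
qed

lemma FF_GG: "m \<in> fsp BM \<Longrightarrow> FF (GG m) = m"
proof (rule lh_ext[OF lh_comp[OF GG_lh GG_into FF_lh] lh_id])
  fix p assume "p \<in> BM"
  then obtain r1 v r2 w where p: "p = ((r1, v), (r2, w))" "r1 \<in> V.RR" "v \<in> BV" "r2 \<in> W.RR" "w \<in> BW"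
    by (auto simp: tensH_basis_def V.BI_eq W.BI_eq)
  show "FF (GG (dl p)) = dl p" unfolding p(1) by (rule FF_GG_basis[OF p(2-5)])
qed

lemma GG_FF: "u \<in> fsp BR \<Longrightarrow> GG (FF u) = u"
proof (rule lh_ext[OF lh_comp[OF FF_lh FF_into GG_lh] lh_id])
  fix b assume "b \<in> BR"
  then obtain x r t v w where q: "b = (x, r, t, v, w)" "x \<in> D" "r \<in> ltrans L (carrier L) (Tx x)"
    "t \<in> ltrans L (Tx x) (Kx x)" "v \<in> BV" "w \<in> BW"
    by (auto simp: dsum_basis_def indH_basis_def BUx_eq)
  show "GG (FF (dl b)) = dl b" unfolding q(1) by (rule GG_FF_basis[OF q(2-6)])
qed

lemma main_iso: "H_iso G L BM \<rho>M BR \<rho>R"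
  unfolding H_iso_def
proof (intro exI conjI ballI)
  show "lin BM BR GG" unfolding lin_iff using GG_lh GG_into by blast
  show "bij_betw GG (fsp BM) (fsp BR)"
    by (rule bij_betw_byWitness[where f' = FF]) (use FF_GG GG_FF GG_into FF_into in auto)
  fix k y and m :: "('l \<times> 'b) \<times> 'l \<times> 'c \<Rightarrow> 'k" assume k: "k \<in> carrier G" and y: "y \<in> carrier L" and m: "m \<in> fsp BM"
  have gm: "GG m \<in> fsp BR" using GG_into[OF m] .
  have "GG (\<rho>M k y m) = GG (\<rho>M k y (FF (GG m)))" using FF_GG[OF m] by simp
  also have "\<dots> = GG (FF (\<rho>R k y (GG m)))" using INT[OF k y gm] by simp
  also have "\<dots> = \<rho>R k y (GG m)" using GG_FF[OF \<rho>R_into[OF y gm]] .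
  finally show "GG (\<rho>M k y m) = \<rho>R k y (GG m)" .
qed

end


theorem theorem4p3:
  fixes G :: "'g monoid" and L :: "'l monoid" and act :: "'l \<Rightarrow> 'g \<Rightarrow> 'g"
    and \<sigma> :: "'g \<Rightarrow> 'l \<Rightarrow> 'l \<Rightarrow> 'k::field" and \<tau> :: "'g \<Rightarrow> 'g \<Rightarrow> 'l \<Rightarrow> 'k"
    and gi gj :: 'g and D :: "'l set"
    and BV :: "'b set" and \<rho>V :: "'l \<Rightarrow> ('b \<Rightarrow> 'k) \<Rightarrow> ('b \<Rightarrow> 'k)"
    and BW :: "'c set" and \<rho>W :: "'l \<Rightarrow> ('c \<Rightarrow> 'k) \<Rightarrow> ('c \<Rightarrow> 'k)"
  assumes "alg_closed_field TYPE('k)"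
    and "group G" and "finite (carrier G)"
    and "group L" and "finite (carrier L)"
    and "act_by_auts G L act"
    and "crossed_data G L act \<sigma> \<tau>"
    and "gi \<in> carrier G" and "gj \<in> carrier G"
    and "tw_mod L (stab L act gi) (\<sigma> gi) BV \<rho>V"
    and "tw_mod L (stab L act gj) (\<sigma> gj) BW \<rho>W"
    and "dcoset_reps L (stab L act gi) (stab L act gj) D"
  shows "H_iso G L
     (tensH_basis (indH_basis L act gi BV) (indH_basis L act gj BW))
     (tensH G \<tau> (indH G L act \<sigma> gi \<rho>V) (indH G L act \<sigma> gj \<rho>W))
     (dsum_basis D (\<lambda>x. indH_basis L act (gi \<otimes>\<^bsub>G\<^esub> act x gj) (Ux_basis G L act gi gj BV BW x)))
     (dsum D (\<lambda>x. indH G L act \<sigma> (gi \<otimes>\<^bsub>G\<^esub> act x gj) (Ux G L act \<sigma> \<tau> gi gj \<rho>V \<rho>W x)))"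
  proof -
  interpret M: mctx L G act \<sigma> \<tau> gi gj BV \<rho>V BW \<rho>W D
    by (intro mctx.intro Hctx.intro Hctx_axioms.intro mctx_axioms.intro) (use assms in auto)
  show ?thesis by (rule M.main_iso)
qed

end
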